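(* Let $n\ge3$, $K\ge1$, and $\underline a=(a_1,\dots,a_K)\in(\mathbb{C}^\times)^K$ with $a_k\neq a_j^{\pm1}$ for all $k\neq j$. If $a_1=1$ and $a_k\neq-1$ for every $k\ge2$, then the image of $\psi_{\underline a}$ is isomorphic to the direct sum of one copy of $sp_{2n}$ and $K-1$ copies of $sl_{2n}$.
   Context: For $n\geq 3$, $M_n=(m_{i,j})$ is the $n\times n$ integer matrix with $m_{i,i}=2$, $m_{i,i+1}=m_{i+1,i}=-1$ ($1\le i\le n-1$), $m_{1,n}=m_{n,1}=1$, all other entries $0$. $\mathrm{gim}(M_n)$ is the complex Lie algebra generated by $e_i,f_i,h_i$ ($1\le i\le n$) with relations: (R1) $[h_i,e_j]=m_{i,j}e_j$, $[h_i,f_j]=-m_{i,j}f_j$, $[e_i,f_i]=h_i$ for all $i,j$; (R2) for $i\ne j$ with $m_{i,j}\le0$: $[e_i,f_j]=0=[f_i,e_j]$, $(\mathrm{ad}\,e_i)^{1-m_{i,j}}e_j=0=(\mathrm{ad}\,f_i)^{1-m_{i,j}}f_j$; (R3) for $i\ne j$ with $m_{i,j}>0$: $[e_i,e_j]=0=[f_i,f_j]$, $(\mathrm{ad}\,e_i)^{m_{i,j}+1}f_j=0=(\mathrm{ad}\,f_i)^{m_{i,j}+1}e_j$. For $a\in\mathbb{C}^\times$, $\psi_a:\mathrm{gim}(M_n)\to sl_{2n}$ is the Lie algebra homomorphism determined by $\psi_a(e_i)=E_{i,i+1}-E_{n+i+1,n+i}$, $\psi_a(f_i)=E_{i+1,i}-E_{n+i,n+i+1}$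 ($1\le i\le n-1$), $\psi_a(e_n)=E_{n,n+1}+a^{-1}E_{1,2n}$, $\psi_a(f_n)=E_{n+1,n}+aE_{2n,1}$, where $E_{i,j}$ are matrix units. For $\underline a=(a_1,\dots,a_K)$, $\psi_{\underline a}=\bigoplus_{k=1}^K\psi_{a_k}:\mathrm{gim}(M_n)\to sl_{2n}^{\oplus K}$, $x\mapsto(\psi_{a_1}(x),\dots,\psi_{a_K}(x))$. *)

theory Defs
  imports Complex_Main
begin

text \<open>Complex matrices with 1-based indices; an n x n matrix is a function
  nat => nat => complex vanishing outside {1..n} x {1..n}.
  An element of a K-fold direct sum of matrix algebras is a function
  nat => (nat => nat => complex), indexed by k in {1..K}, zero outside.\<close>

type_synonym cmat = "nat \<Rightarrow> nat \<Rightarrow> complex"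
type_synonym cmats = "nat \<Rightarrow> cmat"

definition Eu :: "nat \<Rightarrow> nat \<Rightarrow> cmat" where
  "Eu p q = (\<lambda>i j. if i = p \<and> j = q then 1 else 0)"

definition madd :: "cmat \<Rightarrow> cmat \<Rightarrow> cmat" where
  "madd X Y = (\<lambda>i j. X i j + Y i j)"

definition mscal :: "complex \<Rightarrow> cmat \<Rightarrow> cmat" where
  "mscal c X = (\<lambda>i j. c * X i j)"

text \<open>The images of the Chevalley generators under psi_a (in sl_{2n}).\<close>
definition psi_e :: "nat \<Rightarrow> complex \<Rightarrow> nat \<Rightarrow> cmat" where
  "psi_e n a i = (if i < n then madd (Eu i (i+1)) (mscal (-1) (Eu (n+i+1) (n+i)))
                 else madd (Eu n (n+1)) (mscal (inverse a) (Eu 1 (2*n))))"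

definition psi_f :: "nat \<Rightarrow> complex \<Rightarrow> nat \<Rightarrow> cmat" where
  "psi_f n a i = (if i < n then madd (Eu (i+1) i) (mscal (-1) (Eu (n+i) (n+i+1)))
                 else madd (Eu (n+1) n) (mscal a (Eu (2*n) 1)))"

definition psiv_e :: "nat \<Rightarrow> nat \<Rightarrow> (nat \<Rightarrow> complex) \<Rightarrow> nat \<Rightarrow> cmats" where
  "psiv_e n K a i = (\<lambda>k. if 1 \<le> k \<and> k \<le> K then psi_e n (a k) i else (\<lambda>_ _. 0))"

definition psiv_f :: "nat \<Rightarrow> nat \<Rightarrow> (nat \<Rightarrow> complex) \<Rightarrow> nat \<Rightarrow> cmats" where
  "psiv_f n K a i = (\<lambda>k. if 1 \<le> k \<and> k \<le> K then psi_f n (a k) i else (\<lambda>_ _. 0))"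

definition vadd :: "cmats \<Rightarrow> cmats \<Rightarrow> cmats" where
  "vadd X Y = (\<lambda>k i j. X k i j + Y k i j)"

definition vscal :: "complex \<Rightarrow> cmats \<Rightarrow> cmats" where
  "vscal c X = (\<lambda>k i j. c * X k i j)"

definition vbr :: "nat \<Rightarrow> cmats \<Rightarrow> cmats \<Rightarrow> cmats" where
  "vbr N X Y = (\<lambda>k i j. (\<Sum>l\<in>{1..N}. X k i l * Y k l j - Y k i l * X k l j))"

inductive_set lie_gen :: "nat \<Rightarrow> cmats set \<Rightarrow> cmats set" for N G where
  gen: "x \<in> G \<Longrightarrow> x \<in> lie_gen N G"
| zero: "(\<lambda>k i j. 0) \<in> lie_gen N G"
| add: "x \<in> lie_gen N G \<Longrightarrow> y \<in> lie_gen N G \<Longrightarrow> vadd x y \<in> lie_gen N G"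
| scal: "x \<in> lie_gen N G \<Longrightarrow> vscal c x \<in> lie_gen N G"
| br: "x \<in> lie_gen N G \<Longrightarrow> y \<in> lie_gen N G \<Longrightarrow> vbr N x y \<in> lie_gen N G"

text \<open>Image of psi_{a}: since gim(M_n) is generated by the e_i, f_i, h_i
  (with h_i = [e_i,f_i]) and psi_{a} is a Lie algebra homomorphism, its image is
  the Lie subalgebra generated by the images of the generators.\<close>
definition psi_image :: "nat \<Rightarrow> nat \<Rightarrow> (nat \<Rightarrow> complex) \<Rightarrow> cmats set" where
  "psi_image n K a = lie_gen (2*n)
     (\<Union>i\<in>{1..n}. {psiv_e n K a i, psiv_f n K a i,
                   vbr (2*n) (psiv_e n K a i) (psiv_f n K a i)})"

definition supp_ok :: "nat \<Rightarrow> cmat \<Rightarrow> bool" where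
  "supp_ok N X = (\<forall>i j. (i \<notin> {1..N} \<or> j \<notin> {1..N}) \<longrightarrow> X i j = 0)"

definition is_sl :: "nat \<Rightarrow> cmat \<Rightarrow> bool" where
  "is_sl N X = (supp_ok N X \<and> (\<Sum>i\<in>{1..N}. X i i) = 0)"

definition Jsym :: "nat \<Rightarrow> cmat" where
  "Jsym n = (\<lambda>i j. if 1 \<le> i \<and> i \<le> n \<and> j = i + n then 1
                  else if n < i \<and> i \<le> 2*n \<and> i = j + n then -1 else 0)"

definition is_sp :: "nat \<Rightarrow> cmat \<Rightarrow> bool" where
  "is_sp n X = (supp_ok (2*n) X \<and>
     (\<forall>i\<in>{1..2*n}. \<forall>j\<in>{1..2*n}.
        (\<Sum>l\<in>{1..2*n}. X l i * Jsym n l j + Jsym n i l * X l j) = 0))"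

definition sp_sl_sum :: "nat \<Rightarrow> nat \<Rightarrow> cmats set" where
  "sp_sl_sum n K = {X. (\<forall>k. k \<notin> {1..K} \<longrightarrow> X k = (\<lambda>_ _. 0)) \<and> is_sp n (X 1) \<and>
                       (\<forall>k\<in>{2..K}. is_sl (2*n) (X k))}"

definition lie_iso :: "nat \<Rightarrow> cmats set \<Rightarrow> cmats set \<Rightarrow> (cmats \<Rightarrow> cmats) \<Rightarrow> bool" where
  "lie_iso N S T f = (bij_betw f S T \<and>
     (\<forall>x\<in>S. \<forall>y\<in>S. f (vadd x y) = vadd (f x) (f y) \<and> f (vbr N x y) = vbr N (f x) (f y)) \<and>
     (\<forall>c. \<forall>x\<in>S. f (vscal c x) = vscal c (f x)))"

end

theory Submission
  imports Defs
begin

definition mbr :: "nat \<Rightarrow> cmat \<Rightarrow> cmat \<Rightarrow> cmat" where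
  "mbr N X Y = (\<lambda>i j. (\<Sum>l\<in>{1..N}. X i l * Y l j - Y i l * X l j))"

definition zm :: cmat where "zm = (\<lambda>_ _. 0)"

lemma vbr_comp: "vbr N X Y k = mbr N (X k) (Y k)"
  by (simp add: vbr_def mbr_def)

lemma mbr_Eu_left:
  assumes "p \<in> {1..N}" "q \<in> {1..N}"
  shows "mbr N (Eu p q) Y = (\<lambda>i j. (if i = p then Y q j else 0) - (if j = q then Y i p else 0))"
proof (intro ext)
  fix i j
  have "(\<Sum>l\<in>{1..N}. Eu p q i l * Y l j - Y i l * Eu p q l j)
     = (\<Sum>l\<in>{1..N}. (if l = q then (if i = p then Y q j else 0) else 0)) -
       (\<Sum>l\<in>{1..N}. (if l = p then (if j = q then Y i p else 0) else 0))"
    unfolding sum_subtractf[symmetric] by (rule sum.cong) (auto simp: Eu_def)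
  also have "\<dots> = (if i = p then Y q j else 0) - (if j = q then Y i p else 0)"
    using assms by (simp add: sum.delta)
  finally show "mbr N (Eu p q) Y i j = (if i = p then Y q j else 0) - (if j = q then Y i p else 0)"
    by (simp add: mbr_def)
qed

lemma mbr_antisym: "mbr N Y X = mscal (-1) (mbr N X Y)"
  unfolding mbr_def mscal_def by (intro ext) (simp add: sum_negf[symmetric])

lemma mbr_Eu_right:
  assumes "p \<in> {1..N}" "q \<in> {1..N}"
  shows "mbr N X (Eu p q) = (\<lambda>i j. (if j = q then X i p else 0) - (if i = p then X q j else 0))"
  by (subst mbr_antisym) (auto simp: mbr_Eu_left[OF assms] mscal_def)

lemma mbr_madd_left: "mbr N (madd X Y) Z = madd (mbr N X Z) (mbr N Y Z)"
  by (auto simp: mbr_def madd_def sum.distrib[symmetric] algebra_simps intro!: ext sum.cong)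
lemma mbr_madd_right: "mbr N Z (madd X Y) = madd (mbr N Z X) (mbr N Z Y)"
  by (auto simp: mbr_def madd_def sum.distrib[symmetric] algebra_simps intro!: ext sum.cong)
lemma mbr_mscal_left: "mbr N (mscal c X) Z = mscal c (mbr N X Z)"
  by (auto simp: mbr_def mscal_def sum_distrib_left algebra_simps intro!: ext sum.cong)
lemma mbr_mscal_right: "mbr N Z (mscal c X) = mscal c (mbr N Z X)"
  by (auto simp: mbr_def mscal_def sum_distrib_left algebra_simps intro!: ext sum.cong)
lemma mbr_zero_left: "mbr N zm X = zm" by (simp add: mbr_def zm_def)
lemma mbr_zero_right: "mbr N X zm = zm" by (simp add: mbr_def zm_def)

definition sc :: "nat \<Rightarrow> (nat \<Rightarrow> complex) \<Rightarrow> cmat \<Rightarrow> cmats" where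
  "sc K \<phi> M = (\<lambda>k. if 1 \<le> k \<and> k \<le> K then mscal (\<phi> k) M else zm)"

definition ins :: "nat \<Rightarrow> cmat \<Rightarrow> cmats" where
  "ins k M = (\<lambda>k'. if k' = k then M else zm)"

definition vsum :: "('b \<Rightarrow> cmats) \<Rightarrow> 'b set \<Rightarrow> cmats" where
  "vsum F A = (\<lambda>k i j. \<Sum>x\<in>A. F x k i j)"

definition msum :: "('b \<Rightarrow> cmat) \<Rightarrow> 'b set \<Rightarrow> cmat" where
  "msum F A = (\<lambda>i j. \<Sum>x\<in>A. F x i j)"

lemma lie_gen_vsum:
  assumes "finite A" "\<And>x. x \<in> A \<Longrightarrow> F x \<in> lie_gen N G"
  shows "vsum F A \<in> lie_gen N G"
  using assms
proof (induction A rule: finite_induct)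
  case empty
  then show ?case by (simp add: vsum_def lie_gen.zero)
next
  case (insert x A)
  have "vsum F (insert x A) = vadd (F x) (vsum F A)"
    using insert by (simp add: vsum_def vadd_def)
  then show ?case using insert by (auto intro: lie_gen.add)
qed

definition Sk :: "nat \<Rightarrow> cmats set \<Rightarrow> nat \<Rightarrow> cmat set" where
  "Sk N G k = {M. ins k M \<in> lie_gen N G}"

definition Tk :: "nat \<Rightarrow> cmats set \<Rightarrow> nat \<Rightarrow> cmat set" where
  "Tk N G k = {M. \<exists>y\<in>lie_gen N G. y k = M}"

lemma mscal_zm[simp]: "mscal c zm = zm" by (simp add: mscal_def zm_def)
lemma madd_zm[simp]: "madd zm zm = zm" by (simp add: madd_def zm_def)

lemma Sk_add: "M \<in> Sk N G k \<Longrightarrow> M' \<in> Sk N G k \<Longrightarrow> madd M M' \<in> Sk N G k"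
proof -
  assume "M \<in> Sk N G k" "M' \<in> Sk N G k"
  then have "vadd (ins k M) (ins k M') \<in> lie_gen N G" by (auto simp: Sk_def intro: lie_gen.add)
  moreover have "vadd (ins k M) (ins k M') = ins k (madd M M')"
    by (auto simp: vadd_def ins_def madd_def zm_def)
  ultimately show ?thesis by (simp add: Sk_def)
qed

lemma Sk_scal: "M \<in> Sk N G k \<Longrightarrow> mscal c M \<in> Sk N G k"
proof -
  assume "M \<in> Sk N G k"
  then have "vscal c (ins k M) \<in> lie_gen N G" by (auto simp: Sk_def intro: lie_gen.scal)
  moreover have "vscal c (ins k M) = ins k (mscal c M)"
    by (auto simp: vscal_def ins_def mscal_def zm_def)
  ultimately show ?thesis by (simp add: Sk_def)
qed

lemma Sk_zero: "zm \<in> Sk N G k"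
proof -
  have "ins k zm = (\<lambda>k i j. 0)" by (auto simp: ins_def zm_def)
  then show ?thesis by (simp add: Sk_def lie_gen.zero)
qed

lemma Sk_msum:
  assumes "finite A" "\<And>x. x \<in> A \<Longrightarrow> F x \<in> Sk N G k"
  shows "msum F A \<in> Sk N G k"
  using assms
proof (induction A rule: finite_induct)
  case empty
  then show ?case using Sk_zero by (simp add: msum_def zm_def)
next
  case (insert x A)
  have "msum F (insert x A) = madd (F x) (msum F A)"
    using insert by (simp add: msum_def madd_def)
  then show ?case using insert by (auto intro: Sk_add)
qed

lemma Sk_br_right: "M \<in> Sk N G k \<Longrightarrow> Q \<in> Tk N G k \<Longrightarrow> mbr N M Q \<in> Sk N G k"
proof -
  assume "M \<in> Sk N G k" "Q \<in> Tk N G k"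
  then obtain y where y: "y \<in> lie_gen N G" "y k = Q" and m: "ins k M \<in> lie_gen N G"
    by (auto simp: Sk_def Tk_def)
  then have "vbr N (ins k M) y \<in> lie_gen N G" by (auto intro: lie_gen.br)
  moreover have "vbr N (ins k M) y = ins k (mbr N M Q)"
    using y by (auto simp: vbr_comp[abs_def] ins_def mbr_zero_left)
  ultimately show ?thesis by (simp add: Sk_def)
qed

lemma Sk_br_left: "M \<in> Sk N G k \<Longrightarrow> Q \<in> Tk N G k \<Longrightarrow> mbr N Q M \<in> Sk N G k"
  by (subst mbr_antisym) (intro Sk_scal Sk_br_right)

lemma Sk_Tk: "M \<in> Sk N G k \<Longrightarrow> M \<in> Tk N G k"
  by (auto simp: Sk_def Tk_def ins_def intro!: bexI[where x="ins k M"])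

lemma Tk_br: "M \<in> Tk N G k \<Longrightarrow> M' \<in> Tk N G k \<Longrightarrow> mbr N M M' \<in> Tk N G k"
  unfolding Tk_def by (auto simp: vbr_comp[symmetric] intro!: lie_gen.br)

lemma Sk_br: "M \<in> Sk N G k \<Longrightarrow> M' \<in> Sk N G k \<Longrightarrow> mbr N M M' \<in> Sk N G k"
  by (intro Sk_br_right Sk_Tk)

lemma Tk_gen: "y \<in> G \<Longrightarrow> y k \<in> Tk N G k"
  unfolding Tk_def by (auto intro: lie_gen.gen)

definition Lc :: "nat \<Rightarrow> nat \<Rightarrow> cmats set \<Rightarrow> cmat set" where
  "Lc N K G = {M. sc K (\<lambda>_. 1) M \<in> lie_gen N G}"

lemma sc1: "sc K (\<lambda>_. 1) M = (\<lambda>k. if 1 \<le> k \<and> k \<le> K then M else zm)"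
  by (auto simp: sc_def mscal_def)

lemma Lc_br: "M \<in> Lc N K G \<Longrightarrow> M' \<in> Lc N K G \<Longrightarrow> mbr N M M' \<in> Lc N K G"
proof -
  assume "M \<in> Lc N K G" "M' \<in> Lc N K G"
  then have "vbr N (sc K (\<lambda>_. 1) M) (sc K (\<lambda>_. 1) M') \<in> lie_gen N G"
    by (auto simp: Lc_def intro: lie_gen.br)
  moreover have "vbr N (sc K (\<lambda>_. 1) M) (sc K (\<lambda>_. 1) M') = sc K (\<lambda>_. 1) (mbr N M M')"
    by (auto simp: sc1 vbr_comp[abs_def] mbr_zero_left)
  ultimately show ?thesis by (simp add: Lc_def)
qed

lemma Lc_Tk: "M \<in> Lc N K G \<Longrightarrow> 1 \<le> k \<Longrightarrow> k \<le> K \<Longrightarrow> M \<in> Tk N G k"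
  unfolding Lc_def Tk_def by (auto simp: sc1 intro!: bexI[where x="sc K (\<lambda>_. 1) M"])

definition Cm :: "nat \<Rightarrow> nat \<Rightarrow> nat \<Rightarrow> cmat" where
  "Cm n p q = madd (Eu p q) (mscal (-1) (Eu (n+q) (n+p)))"

lemma mbr_Cm_left:
  assumes "r \<in> {1..n}" "s \<in> {1..n}"
  shows "mbr (2*n) (Cm n r s) Y = (\<lambda>i j. (if i = r then Y s j else 0) - (if j = s then Y i r else 0)
     - ((if i = n+s then Y (n+r) j else 0) - (if j = n+r then Y i (n+s) else 0)))"
proof -
  have a: "r \<in> {1..2*n}" "s \<in> {1..2*n}" "n+s \<in> {1..2*n}" "n+r \<in> {1..2*n}" using assms by auto
  show ?thesis unfolding Cm_def mbr_madd_left mbr_mscal_left mbr_Eu_left[OF a(1,2)] mbr_Eu_left[OF a(3,4)]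
    by (simp add: madd_def mscal_def algebra_simps)
qed

lemma Cm_TL:
  assumes "r \<in> {1..n}" "s \<in> {1..n}" "p \<in> {1..n}" "q \<in> {1..n}"
  shows "mbr (2*n) (Cm n r s) (Eu p q) = madd (if s = p then Eu r q else zm) (mscal (-1) (if q = r then Eu p s else zm))"
proof (intro ext)
  fix i j
  show "mbr (2*n) (Cm n r s) (Eu p q) i j = madd (if s = p then Eu r q else zm) (mscal (-1) (if q = r then Eu p s else zm)) i j"
    using assms unfolding mbr_Cm_left[OF assms(1,2)] by (simp add: Eu_def madd_def mscal_def zm_def)
qed

lemma Cm_Cm:
  assumes "r \<in> {1..n}" "s \<in> {1..n}" "p \<in> {1..n}" "q \<in> {1..n}"
  shows "mbr (2*n) (Cm n r s) (Cm n p q) = madd (if s = p then Cm n r q else zm) (mscal (-1) (if q = r then Cm n p s else zm))"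
proof (intro ext)
  fix i j
  show "mbr (2*n) (Cm n r s) (Cm n p q) i j = (madd (if s = p then Cm n r q else zm) (mscal (-1) (if q = r then Cm n p s else zm))) i j"
    using assms unfolding mbr_Cm_left[OF assms(1,2)] unfolding Cm_def by (simp add: Eu_def madd_def mscal_def zm_def)
qed

lemma Cm_TR:
  assumes "r \<in> {1..n}" "s \<in> {1..n}" "p \<in> {1..n}" "q \<in> {1..n}"
  shows "mbr (2*n) (Cm n r s) (Eu p (n+q)) = madd (if s = p then Eu r (n+q) else zm) (if q = s then Eu p (n+r) else zm)"
proof (intro ext)
  fix i j
  show "mbr (2*n) (Cm n r s) (Eu p (n+q)) i j = (madd (if s = p then Eu r (n+q) else zm) (if q = s then Eu p (n+r) else zm)) i j"
    using assms unfolding mbr_Cm_left[OF assms(1,2)] by (simp add: Eu_def madd_def mscal_def zm_def)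
qed

lemma Cm_BL:
  assumes "r \<in> {1..n}" "s \<in> {1..n}" "p \<in> {1..n}" "q \<in> {1..n}"
  shows "mbr (2*n) (Cm n r s) (Eu (n+p) q) = mscal (-1) (madd (if r = p then Eu (n+s) q else zm) (if q = r then Eu (n+p) s else zm))"
proof (intro ext)
  fix i j
  show "mbr (2*n) (Cm n r s) (Eu (n+p) q) i j = (mscal (-1) (madd (if r = p then Eu (n+s) q else zm) (if q = r then Eu (n+p) s else zm))) i j"
    using assms unfolding mbr_Cm_left[OF assms(1,2)] by (simp add: Eu_def madd_def mscal_def zm_def)
qed

lemma Eu_Eu:
  assumes "p \<in> {1..N}" "q \<in> {1..N}" "r \<in> {1..N}" "s \<in> {1..N}"
  shows "mbr N (Eu p q) (Eu r s) = madd (if q = r then Eu p s else zm) (mscal (-1) (if s = p then Eu r q else zm))"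
proof (intro ext)
  fix i j
  show "mbr N (Eu p q) (Eu r s) i j = (madd (if q = r then Eu p s else zm) (mscal (-1) (if s = p then Eu r q else zm))) i j"
    using assms unfolding mbr_Eu_left[OF assms(1,2)] by (simp add: Eu_def madd_def mscal_def zm_def)
qed

lemma madd_zm_r[simp]: "madd X zm = X" by (simp add: madd_def zm_def)
lemma madd_zm_l[simp]: "madd zm X = X" by (simp add: madd_def zm_def)

lemma chain_gen:
  fixes S :: "cmat set" and u :: "nat \<Rightarrow> nat \<Rightarrow> cmat"
  assumes br: "\<And>x y. x\<in>S \<Longrightarrow> y\<in>S \<Longrightarrow> mbr N x y \<in> S"
    and comp: "\<And>p q r. p\<in>{lo..hi} \<Longrightarrow> q\<in>{lo..hi} \<Longrightarrow> r\<in>{lo..hi} \<Longrightarrow> p\<noteq>q \<Longrightarrow> q\<noteq>r \<Longrightarrow> p\<noteq>r \<Longrightarrow> mbr N (u p q) (u q r) = u p r"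
    and base: "\<And>i. lo \<le> i \<Longrightarrow> i < hi \<Longrightarrow> u i (Suc i) \<in> S \<and> u (Suc i) i \<in> S"
  shows "p\<in>{lo..hi} \<Longrightarrow> q\<in>{lo..hi} \<Longrightarrow> p\<noteq>q \<Longrightarrow> u p q \<in> S"
proof -
  have up: "\<forall>p. lo \<le> p \<and> p + Suc d \<le> hi \<longrightarrow> u p (p + Suc d) \<in> S \<and> u (p + Suc d) p \<in> S" for d
  proof (induction d)
    case 0 show ?case
    proof (intro allI impI)
      fix p assume "lo \<le> p \<and> p + Suc 0 \<le> hi"
      then show "u p (p + Suc 0) \<in> S \<and> u (p + Suc 0) p \<in> S" using base[of p] by simp
    qed
  next
    case (Suc d)
    show ?case
    proof (intro allI impI)
      fix p assume h: "lo \<le> p \<and> p + Suc (Suc d) \<le> hi"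
      have a: "u p (p + Suc d) \<in> S" "u (p + Suc d) p \<in> S" using Suc h by auto
      have b: "u (p + Suc d) (p + Suc (Suc d)) \<in> S" "u (p + Suc (Suc d)) (p + Suc d) \<in> S"
        using base[of "p + Suc d"] h by auto
      have "mbr N (u p (p + Suc d)) (u (p + Suc d) (p + Suc (Suc d))) = u p (p + Suc (Suc d))"
        using h by (intro comp) simp_all
      moreover have "mbr N (u (p + Suc (Suc d)) (p + Suc d)) (u (p + Suc d) p) = u (p + Suc (Suc d)) p"
        using h by (intro comp) simp_all
      ultimately show "u p (p + Suc (Suc d)) \<in> S \<and> u (p + Suc (Suc d)) p \<in> S"
        using br[OF a(1) b(1)] br[OF b(2) a(2)] by simp
    qed
  qed
  assume pq: "p\<in>{lo..hi}" "q\<in>{lo..hi}" "p\<noteq>q"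
  show "u p q \<in> S"
  proof (cases "p < q")
    case True
    obtain d where d: "q = p + Suc d" using less_imp_Suc_add[OF True] by (elim exE) simp
    have "lo \<le> p \<and> p + Suc d \<le> hi" using pq unfolding d by simp
    then have "u p (p + Suc d) \<in> S \<and> u (p + Suc d) p \<in> S" by (rule mp[OF spec[OF up[of d], of p]])
    then show ?thesis unfolding d by (rule conjunct1)
  next
    case False
    then have qp: "q < p" using pq(3) by simp
    obtain d where d: "p = q + Suc d" using less_imp_Suc_add[OF qp] by (elim exE) simp
    have "lo \<le> q \<and> q + Suc d \<le> hi" using pq unfolding d by simp
    then have "u q (q + Suc d) \<in> S \<and> u (q + Suc d) q \<in> S" by (rule mp[OF spec[OF up[of d], of q]])
    then show ?thesis unfolding d by (rule conjunct2)
  qed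
qed

lemma transport:
  fixes u v :: "nat \<Rightarrow> nat \<Rightarrow> cmat"
  assumes vT: "\<And>r s. r\<in>I \<Longrightarrow> s\<in>I \<Longrightarrow> r\<noteq>s \<Longrightarrow> v r s \<in> Tk N G k"
    and rel: "\<And>r s p q. r\<in>I \<Longrightarrow> s\<in>I \<Longrightarrow> p\<in>I \<Longrightarrow> q\<in>I \<Longrightarrow> r\<noteq>s \<Longrightarrow> p\<noteq>q \<Longrightarrow>
       mbr N (v r s) (u p q) = madd (if s = p then u r q else zm) (mscal (-1) (if q = r then u p s else zm))"
    and three: "\<And>p q. p\<in>I \<Longrightarrow> q\<in>I \<Longrightarrow> \<exists>r\<in>I. r\<noteq>p \<and> r\<noteq>q"
    and start: "pz\<in>I" "qz\<in>I" "pz\<noteq>qz" "u pz qz \<in> Sk N G k"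
  shows "p\<in>I \<Longrightarrow> q\<in>I \<Longrightarrow> p\<noteq>q \<Longrightarrow> u p q \<in> Sk N G k"
proof -
  have s1: "u r qz \<in> Sk N G k" if r: "r\<in>I" "r\<noteq>qz" for r
  proof (cases "r = pz")
    case True then show ?thesis using start by simp
  next
    case False
    have e: "mbr N (v r pz) (u pz qz) = u r qz" using rel[OF r(1) start(1) start(1) start(2) False start(3)] r(2) by simp
    have "mbr N (v r pz) (u pz qz) \<in> Sk N G k"
      by (rule Sk_br_left[OF start(4) vT[OF r(1) start(1) False]])
    then show ?thesis unfolding e .
  qed
  have s2: "u p s \<in> Sk N G k" if ps: "p\<in>I" "s\<in>I" "p\<noteq>s" "p\<noteq>qz" for p s
  proof (cases "s = qz")
    case True then show ?thesis using s1[OF ps(1) ps(4)] by simp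
  next
    case False
    have e: "mbr N (v qz s) (u p qz) = mscal (-1) (u p s)"
      using rel[OF start(2) ps(2) ps(1) start(2) _ ps(4)] False ps(3) by (simp add: eq_commute[of s qz])
    have "mbr N (v qz s) (u p qz) \<in> Sk N G k"
      by (rule Sk_br_left[OF s1[OF ps(1) ps(4)] vT[OF start(2) ps(2)]]) (use False in simp)
    then have "mscal (-1) (mscal (-1) (u p s)) \<in> Sk N G k" unfolding e by (rule Sk_scal)
    then show ?thesis by (simp add: mscal_def)
  qed
  assume pq: "p\<in>I" "q\<in>I" "p\<noteq>q"
  show "u p q \<in> Sk N G k"
  proof (cases "p = qz")
    case False show ?thesis by (rule s2[OF pq False])
  next
    case True
    obtain r where r: "r\<in>I" "r\<noteq>qz" "r\<noteq>q" using three[OF start(2) pq(2)] by blast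
    have e: "mbr N (v qz r) (u r q) = u qz q" using rel[OF start(2) r(1) r(1) pq(2) _ r(3)] r(2) True pq(3)
      by (simp add: eq_commute[of r qz])
    have "mbr N (v qz r) (u r q) \<in> Sk N G k"
      by (rule Sk_br_left[OF s2[OF r(1) pq(2) r(3) r(2)] vT[OF start(2) r(1)]]) (use r in simp)
    then show ?thesis unfolding e using True by simp
  qed
qed

lemma hub:
  fixes u :: "nat \<Rightarrow> nat \<Rightarrow> cmat"
  assumes br: "\<And>x y. x\<in>S \<Longrightarrow> y\<in>S \<Longrightarrow> mbr N x y \<in> S"
    and comp: "\<And>p q r. p\<in>I \<Longrightarrow> q\<in>I \<Longrightarrow> r\<in>I \<Longrightarrow> p\<noteq>q \<Longrightarrow> q\<noteq>r \<Longrightarrow> p\<noteq>r \<Longrightarrow> mbr N (u p q) (u q r) = u p r"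
    and h: "h \<in> I" "\<And>x. x\<in>I \<Longrightarrow> x\<noteq>h \<Longrightarrow> u h x \<in> S \<and> u x h \<in> S"
  shows "p\<in>I \<Longrightarrow> q\<in>I \<Longrightarrow> p\<noteq>q \<Longrightarrow> u p q \<in> S"
proof -
  assume pq: "p\<in>I" "q\<in>I" "p\<noteq>q"
  show ?thesis
  proof (cases "p = h \<or> q = h")
    case True then show ?thesis using h pq by auto
  next
    case False
    then have "mbr N (u p h) (u h q) = u p q" using comp pq h by auto
    then show ?thesis using br[of "u p h" "u h q"] h pq False by auto
  qed
qed

lemma psi_e_n: "psi_e n b n = madd (Eu n (n+1)) (mscal (inverse b) (Eu 1 (2*n)))"
  by (simp add: psi_e_def)
lemma psi_f_n: "psi_f n b n = madd (Eu (n+1) n) (mscal b (Eu (2*n) 1))"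
  by (simp add: psi_f_def)
lemma psi_e_lt: "i < n \<Longrightarrow> psi_e n b i = Cm n i (i+1)"
  by (simp add: psi_e_def Cm_def add.assoc)
lemma psi_f_lt: "i < n \<Longrightarrow> psi_f n b i = Cm n (i+1) i"
  by (simp add: psi_f_def Cm_def add.assoc)

lemma M1:
  assumes "n \<ge> 3"
  shows "mbr (2*n) (Cm n 1 n) (psi_e n b n) = mscal (1 + inverse b) (Eu 1 (n+1))"
proof (intro ext)
  fix i j
  have a: "(1::nat) \<in> {1..n}" "n \<in> {1..n}" using assms by auto
  show "mbr (2*n) (Cm n 1 n) (psi_e n b n) i j = mscal (1 + inverse b) (Eu 1 (n+1)) i j"
    unfolding mbr_Cm_left[OF a] psi_e_n using assms by (simp add: Eu_def madd_def mscal_def algebra_simps)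
qed

lemma M2:
  assumes "n \<ge> 3"
  shows "mbr (2*n) (Cm n n 1) (psi_f n b n) = mscal (-(1 + b)) (Eu (n+1) 1)"
proof (intro ext)
  fix i j
  have a: "n \<in> {1..n}" "(1::nat) \<in> {1..n}" using assms by auto
  show "mbr (2*n) (Cm n n 1) (psi_f n b n) i j = mscal (-(1 + b)) (Eu (n+1) 1) i j"
    unfolding mbr_Cm_left[OF a] psi_f_n using assms by (simp add: Eu_def madd_def mscal_def algebra_simps)
qed

definition Hd :: "nat \<Rightarrow> cmat" where "Hd n = madd (Eu 1 1) (mscal (-1) (Eu (n+1) (n+1)))"

lemma M3:
  assumes "n \<ge> 3"
  shows "mbr (2*n) (Eu 1 (n+1)) (Eu (n+1) 1) = Hd n"
proof (intro ext)
  fix i j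
  have a: "(1::nat) \<in> {1..2*n}" "n+1 \<in> {1..2*n}" using assms by auto
  show "mbr (2*n) (Eu 1 (n+1)) (Eu (n+1) 1) i j = Hd n i j"
    unfolding mbr_Eu_left[OF a] Hd_def using assms by (simp add: Eu_def madd_def mscal_def)
qed

lemma M4:
  assumes "n \<ge> 3"
  shows "mbr (2*n) (Hd n) (Cm n 1 2) = Cm n 1 2"
proof (intro ext)
  fix i j
  have a: "(1::nat) \<in> {1..2*n}" "n+1 \<in> {1..2*n}" using assms by auto
  show "mbr (2*n) (Hd n) (Cm n 1 2) i j = Cm n 1 2 i j"
    unfolding Hd_def mbr_madd_left mbr_mscal_left mbr_Eu_left[OF a(1) a(1)] mbr_Eu_left[OF a(2) a(2)]
    using assms by (simp add: Cm_def Eu_def madd_def mscal_def)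
qed

lemma mu_inj:
  fixes x y :: complex
  assumes "x \<noteq> 0" "y \<noteq> 0" "(1 + inverse x) * (1 + x) = (1 + inverse y) * (1 + y)"
  shows "x = y \<or> x = inverse y"
proof -
  have ex: "(1 + inverse x) * (1 + x) = 2 + x + inverse x" using assms(1) by (simp add: algebra_simps)
  have ey: "(1 + inverse y) * (1 + y) = 2 + y + inverse y" using assms(2) by (simp add: algebra_simps)
  have "x + inverse x = y + inverse y" using assms(3) unfolding ex ey by simp
  then have "(x + inverse x) * (x * y) = (y + inverse y) * (x * y)" by simp
  moreover have "(x + inverse x) * (x * y) = x * x * y + y"
    using assms(1) by (simp add: distrib_right mult.assoc[symmetric] mult.commute[of "inverse x" x])
  moreover have "(y + inverse y) * (x * y) = y * y * x + x"
    using assms(2) by (simp add: distrib_right mult.commute[of x y] mult.assoc[symmetric] mult.commute[of "inverse y" y])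
  ultimately have "x * x * y + y = y * y * x + x" by simp
  then have "(x - y) * (x * y - 1) = 0" by (simp add: algebra_simps)
  then have "x = y \<or> x * y = 1" by simp
  then show ?thesis using assms(2) by (auto simp: field_simps)
qed

locale LS =
  fixes n K :: nat and a :: "nat \<Rightarrow> complex"
  assumes n3: "n \<ge> 3" and K1: "K \<ge> 1" and anz: "\<forall>k\<in>{1..K}. a k \<noteq> 0"
    and adist: "\<forall>k\<in>{1..K}. \<forall>j\<in>{1..K}. k \<noteq> j \<longrightarrow> a k \<noteq> a j \<and> a k \<noteq> inverse (a j)"
    and a1: "a 1 = 1" and am1: "\<forall>k\<in>{2..K}. a k \<noteq> -1"
begin

definition GG where "GG = (\<Union>i\<in>{1..n}. {psiv_e n K a i, psiv_f n K a i,
                   vbr (2*n) (psiv_e n K a i) (psiv_f n K a i)})"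

lemma psi_image_eq: "psi_image n K a = lie_gen (2*n) GG"
  by (simp add: psi_image_def GG_def)

lemma e_G: "i\<in>{1..n} \<Longrightarrow> psiv_e n K a i \<in> GG" unfolding GG_def by blast
lemma f_G: "i\<in>{1..n} \<Longrightarrow> psiv_f n K a i \<in> GG" unfolding GG_def by blast

lemma e_T: "i\<in>{1..n} \<Longrightarrow> k\<in>{1..K} \<Longrightarrow> psi_e n (a k) i \<in> Tk (2*n) GG k"
proof -
  assume i: "i\<in>{1..n}" and k: "k\<in>{1..K}"
  have "psiv_e n K a i k \<in> Tk (2*n) GG k" by (rule Tk_gen[OF e_G[OF i]])
  then show ?thesis using k by (simp add: psiv_e_def)
qed
lemma f_T: "i\<in>{1..n} \<Longrightarrow> k\<in>{1..K} \<Longrightarrow> psi_f n (a k) i \<in> Tk (2*n) GG k"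
proof -
  assume i: "i\<in>{1..n}" and k: "k\<in>{1..K}"
  have "psiv_f n K a i k \<in> Tk (2*n) GG k" by (rule Tk_gen[OF f_G[OF i]])
  then show ?thesis using k by (simp add: psiv_f_def)
qed

lemma Lc_base: "1 \<le> i \<Longrightarrow> i < n \<Longrightarrow> Cm n i (Suc i) \<in> Lc (2*n) K GG \<and> Cm n (Suc i) i \<in> Lc (2*n) K GG"
proof -
  assume i: "1 \<le> i" "i < n"
  have "sc K (\<lambda>_. 1) (Cm n i (Suc i)) = psiv_e n K a i"
    using i by (auto simp: sc1 psiv_e_def psi_e_lt zm_def)
  moreover have "sc K (\<lambda>_. 1) (Cm n (Suc i) i) = psiv_f n K a i"
    using i by (auto simp: sc1 psiv_f_def psi_f_lt zm_def)
  moreover have "psiv_e n K a i \<in> lie_gen (2*n) GG" "psiv_f n K a i \<in> lie_gen (2*n) GG"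
    using i by (auto intro!: lie_gen.gen e_G f_G)
  ultimately show ?thesis by (simp add: Lc_def)
qed

lemma Cm_Lc: "p\<in>{1..n} \<Longrightarrow> q\<in>{1..n} \<Longrightarrow> p\<noteq>q \<Longrightarrow> Cm n p q \<in> Lc (2*n) K GG"
proof (rule chain_gen[where N="2*n"])
  show "\<And>x y. x \<in> Lc (2*n) K GG \<Longrightarrow> y \<in> Lc (2*n) K GG \<Longrightarrow> mbr (2*n) x y \<in> Lc (2*n) K GG"
    by (rule Lc_br)
  show "\<And>p q r. p\<in>{1..n} \<Longrightarrow> q\<in>{1..n} \<Longrightarrow> r\<in>{1..n} \<Longrightarrow> p\<noteq>q \<Longrightarrow> q\<noteq>r \<Longrightarrow> p\<noteq>r \<Longrightarrow>
     mbr (2*n) (Cm n p q) (Cm n q r) = Cm n p r"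
    by (simp add: Cm_Cm)
  show "\<And>i. 1 \<le> i \<Longrightarrow> i < n \<Longrightarrow> Cm n i (Suc i) \<in> Lc (2*n) K GG \<and> Cm n (Suc i) i \<in> Lc (2*n) K GG"
    by (rule Lc_base)
qed

lemma Cm_T: "p\<in>{1..n} \<Longrightarrow> q\<in>{1..n} \<Longrightarrow> p\<noteq>q \<Longrightarrow> k\<in>{1..K} \<Longrightarrow> Cm n p q \<in> Tk (2*n) GG k"
proof -
  assume h: "p\<in>{1..n}" "q\<in>{1..n}" "p\<noteq>q" "k\<in>{1..K}"
  show ?thesis by (rule Lc_Tk[OF Cm_Lc[OF h(1-3)]]) (use h(4) in simp_all)
qed

definition lam where "lam k = (1 + inverse (a k)) * (-(1 + a k))"

lemma lam_inj: "k\<in>{1..K} \<Longrightarrow> j\<in>{1..K} \<Longrightarrow> lam k = lam j \<Longrightarrow> k = j"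
proof (rule ccontr)
  assume h: "k\<in>{1..K}" "j\<in>{1..K}" "lam k = lam j" "k \<noteq> j"
  moreover have "\<And>k. (1 + inverse (a k)) * (1 + a k) = - lam k" by (simp add: lam_def algebra_simps)
  ultimately have "(1 + inverse (a k)) * (1 + a k) = (1 + inverse (a j)) * (1 + a j)"
    by simp
  then have "a k = a j \<or> a k = inverse (a j)" using mu_inj anz h by auto
  then show False using adist h by auto
qed

lemma hh_eq: "vbr (2*n) (vbr (2*n) (sc K (\<lambda>_. 1) (Cm n 1 n)) (psiv_e n K a n))
     (vbr (2*n) (sc K (\<lambda>_. 1) (Cm n n 1)) (psiv_f n K a n)) = sc K lam (Hd n)"
proof (intro ext)
  fix k i j
  show "vbr (2*n) (vbr (2*n) (sc K (\<lambda>_. 1) (Cm n 1 n)) (psiv_e n K a n))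
     (vbr (2*n) (sc K (\<lambda>_. 1) (Cm n n 1)) (psiv_f n K a n)) k i j = sc K lam (Hd n) k i j"
  proof (cases "1 \<le> k \<and> k \<le> K")
    case True
    have s1: "sc K (\<lambda>_. 1) (Cm n 1 n) k = Cm n 1 n" "sc K (\<lambda>_. 1) (Cm n n 1) k = Cm n n 1"
      using True unfolding sc1 by simp_all
    have s2: "psiv_e n K a n k = psi_e n (a k) n" "psiv_f n K a n k = psi_f n (a k) n"
      using True unfolding psiv_e_def psiv_f_def by simp_all
    have s3: "sc K lam (Hd n) k = mscal (lam k) (Hd n)" using True unfolding sc_def by simp
    show ?thesis unfolding vbr_comp s1 s2 s3 M1[OF n3] M2[OF n3] mbr_mscal_left mbr_mscal_right M3[OF n3]
      by (simp add: lam_def mscal_def)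
  next
    case False
    have s1: "sc K (\<lambda>_. 1) (Cm n 1 n) k = zm" "sc K (\<lambda>_. 1) (Cm n n 1) k = zm"
      using False unfolding sc1 by auto
    have s3: "sc K lam (Hd n) k = zm" using False unfolding sc_def by auto
    show ?thesis unfolding vbr_comp s1 s3 mbr_zero_left by (simp add: zm_def)
  qed
qed

lemma hh_L: "sc K lam (Hd n) \<in> lie_gen (2*n) GG"
proof -
  have "sc K (\<lambda>_. 1) (Cm n 1 n) \<in> lie_gen (2*n) GG" "sc K (\<lambda>_. 1) (Cm n n 1) \<in> lie_gen (2*n) GG"
    using Cm_Lc[of 1 n] Cm_Lc[of n 1] n3 by (auto simp: Lc_def)
  moreover have "psiv_e n K a n \<in> lie_gen (2*n) GG" "psiv_f n K a n \<in> lie_gen (2*n) GG"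
    using n3 by (auto intro!: lie_gen.gen e_G f_G)
  ultimately show ?thesis unfolding hh_eq[symmetric] by (intro lie_gen.br)
qed

lemma vadd_sc: "vadd (sc K \<phi> X) (sc K \<psi> X) = sc K (\<lambda>k. \<phi> k + \<psi> k) X"
  by (auto simp: vadd_def sc_def mscal_def zm_def algebra_simps intro!: ext)
lemma vscal_sc: "vscal c (sc K \<phi> X) = sc K (\<lambda>k. c * \<phi> k) X"
  by (auto simp: vscal_def sc_def mscal_def zm_def intro!: ext)
lemma vbr_sc: "vbr N (sc K \<phi> A) (sc K \<psi> B) = sc K (\<lambda>k. \<phi> k * \<psi> k) (mbr N A B)"
  by (auto simp: vbr_comp[abs_def] sc_def mbr_mscal_left mbr_mscal_right mbr_zero_left
      intro!: ext) (simp add: mscal_def)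

lemma lag_step:
  assumes "sc K \<psi> (Cm n 1 2) \<in> lie_gen (2*n) GG"
  shows "sc K (\<lambda>k. (lam k - c) * \<psi> k) (Cm n 1 2) \<in> lie_gen (2*n) GG"
proof -
  have "vadd (vbr (2*n) (sc K lam (Hd n)) (sc K \<psi> (Cm n 1 2))) (vscal (-c) (sc K \<psi> (Cm n 1 2)))
      \<in> lie_gen (2*n) GG"
    using assms hh_L by (intro lie_gen.add lie_gen.br lie_gen.scal)
  moreover have "vadd (vbr (2*n) (sc K lam (Hd n)) (sc K \<psi> (Cm n 1 2))) (vscal (-c) (sc K \<psi> (Cm n 1 2)))
     = sc K (\<lambda>k. (lam k - c) * \<psi> k) (Cm n 1 2)"
    unfolding vbr_sc M4[OF n3] vscal_sc vadd_sc by (simp add: algebra_simps)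
  ultimately show ?thesis by simp
qed

lemma lag_prod:
  assumes "finite J"
  shows "sc K (\<lambda>k. \<Prod>j\<in>J. (lam k - lam j)) (Cm n 1 2) \<in> lie_gen (2*n) GG"
  using assms
proof (induction J rule: finite_induct)
  case empty
  then show ?case using Cm_Lc[of 1 2] n3 by (simp add: Lc_def)
next
  case (insert x F)
  then show ?case using lag_step[OF insert.IH, of "lam x"] by simp
qed

lemma X1_S: "k0\<in>{1..K} \<Longrightarrow> Cm n 1 2 \<in> Sk (2*n) GG k0"
proof -
  assume k0: "k0\<in>{1..K}"
  define J where "J = {1..K} - {k0}"
  define P where "P = (\<Prod>j\<in>J. (lam k0 - lam j))"
  have P0: "P \<noteq> 0" unfolding P_def J_def using lam_inj k0 by auto
  have "vscal (inverse P) (sc K (\<lambda>k. \<Prod>j\<in>J. (lam k - lam j)) (Cm n 1 2)) \<in> lie_gen (2*n) GG"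
    by (intro lie_gen.scal lag_prod) (simp add: J_def)
  moreover have "vscal (inverse P) (sc K (\<lambda>k. \<Prod>j\<in>J. (lam k - lam j)) (Cm n 1 2)) = ins k0 (Cm n 1 2)"
  proof (intro ext)
    fix k i j
    show "vscal (inverse P) (sc K (\<lambda>k. \<Prod>j\<in>J. (lam k - lam j)) (Cm n 1 2)) k i j = ins k0 (Cm n 1 2) k i j"
    proof (cases "k = k0")
      case True
      then show ?thesis using k0 P0 by (simp add: vscal_def sc_def ins_def mscal_def P_def)
    next
      case False
      show ?thesis
      proof (cases "1 \<le> k \<and> k \<le> K")
        case True
        then have "k \<in> J" using False by (simp add: J_def)
        then have "(\<Prod>j\<in>J. (lam k - lam j)) = 0"
          by (intro prod_zero) (auto simp: J_def)
        then show ?thesis using True False by (simp add: vscal_def sc_def ins_def mscal_def zm_def)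
      next
        case F2: False
        then show ?thesis using False by (auto simp: vscal_def sc_def ins_def mscal_def zm_def)
      qed
    qed
  qed
  ultimately show ?thesis by (simp add: Sk_def)
qed


end

lemma N1:
  assumes "n \<ge> 3"
  shows "mbr (2*n) (Cm n 2 n) (psi_e n b n) = madd (Eu 2 (n+1)) (mscal (inverse b) (Eu 1 (n+2)))"
proof (intro ext)
  fix i j
  have a: "(2::nat) \<in> {1..n}" "n \<in> {1..n}" using assms by auto
  show "mbr (2*n) (Cm n 2 n) (psi_e n b n) i j = madd (Eu 2 (n+1)) (mscal (inverse b) (Eu 1 (n+2))) i j"
    unfolding mbr_Cm_left[OF a] psi_e_n using assms by (simp add: Eu_def madd_def mscal_def algebra_simps)
qed

lemma N2:
  assumes "n \<ge> 3"
  shows "mbr (2*n) (Cm n 3 1) (madd (Eu 2 (n+1)) (mscal c (Eu 1 (n+2)))) = madd (Eu 2 (n+3)) (mscal c (Eu 3 (n+2)))"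
proof (intro ext)
  fix i j
  have a: "(3::nat) \<in> {1..n}" "(1::nat) \<in> {1..n}" using assms by auto
  show "mbr (2*n) (Cm n 3 1) (madd (Eu 2 (n+1)) (mscal c (Eu 1 (n+2)))) i j = madd (Eu 2 (n+3)) (mscal c (Eu 3 (n+2))) i j"
    unfolding mbr_Cm_left[OF a] using assms by (simp add: Eu_def madd_def mscal_def algebra_simps)
qed

lemma N3:
  assumes "n \<ge> 3"
  shows "mbr (2*n) (Cm n 1 2) (madd (Eu 2 (n+3)) (mscal c (Eu 3 (n+2)))) = madd (Eu 1 (n+3)) (mscal c (Eu 3 (n+1)))"
proof (intro ext)
  fix i j
  have a: "(1::nat) \<in> {1..n}" "(2::nat) \<in> {1..n}" using assms by auto
  show "mbr (2*n) (Cm n 1 2) (madd (Eu 2 (n+3)) (mscal c (Eu 3 (n+2)))) i j = madd (Eu 1 (n+3)) (mscal c (Eu 3 (n+1))) i j"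
    unfolding mbr_Cm_left[OF a] using assms by (simp add: Eu_def madd_def mscal_def algebra_simps)
qed

lemma N4:
  assumes "n \<ge> 3"
  shows "mbr (2*n) (Cm n 2 3) (madd (Eu 1 (n+3)) (mscal c (Eu 3 (n+1)))) = madd (Eu 1 (n+2)) (mscal c (Eu 2 (n+1)))"
proof (intro ext)
  fix i j
  have a: "(2::nat) \<in> {1..n}" "(3::nat) \<in> {1..n}" using assms by auto
  show "mbr (2*n) (Cm n 2 3) (madd (Eu 1 (n+3)) (mscal c (Eu 3 (n+1)))) i j = madd (Eu 1 (n+2)) (mscal c (Eu 2 (n+1))) i j"
    unfolding mbr_Cm_left[OF a] using assms by (simp add: Eu_def madd_def mscal_def algebra_simps)
qed

lemma N5:
  assumes "n \<ge> 3"
  shows "madd (madd (Eu 2 (n+1)) (mscal c (Eu 1 (n+2)))) (mscal (-c) (madd (Eu 1 (n+2)) (mscal c (Eu 2 (n+1)))))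
     = mscal (1 - c*c) (Eu 2 (n+1))"
  using assms by (auto simp: Eu_def madd_def mscal_def algebra_simps intro!: ext)

lemma N6:
  assumes "n \<ge> 3"
  shows "mbr (2*n) (Eu 2 (n+1)) (psi_f n b n) = Eu 2 n"
proof (intro ext)
  fix i j
  have a: "(2::nat) \<in> {1..2*n}" "n+1 \<in> {1..2*n}" using assms by auto
  show "mbr (2*n) (Eu 2 (n+1)) (psi_f n b n) i j = Eu 2 n i j"
    unfolding mbr_Eu_left[OF a] psi_f_n using assms by (simp add: Eu_def madd_def mscal_def)
qed

lemma N7:
  assumes "n \<ge> 3"
  shows "mbr (2*n) (psi_f n b n) (Eu n 2) = Eu (n+1) 2"
proof (intro ext)
  fix i j
  have a: "n \<in> {1..2*n}" "(2::nat) \<in> {1..2*n}" using assms by auto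
  show "mbr (2*n) (psi_f n b n) (Eu n 2) i j = Eu (n+1) 2 i j"
    unfolding mbr_Eu_right[OF a] psi_f_n using assms by (simp add: Eu_def madd_def mscal_def)
qed

context LS begin

lemma three: "p\<in>{1..n} \<Longrightarrow> q\<in>{1..n} \<Longrightarrow> \<exists>r\<in>{1..n}. r\<noteq>p \<and> r\<noteq>q"
proof -
  assume "p\<in>{1..n}" "q\<in>{1..n}"
  have "1 \<in> {1..n}" "2 \<in> {1..n}" "3 \<in> {1..n}" using n3 by auto
  then show ?thesis by (metis numeral_One numeral_eq_iff semiring_norm(83) semiring_norm(86) semiring_norm(89))
qed

lemma Cm_S: "k\<in>{1..K} \<Longrightarrow> p\<in>{1..n} \<Longrightarrow> q\<in>{1..n} \<Longrightarrow> p\<noteq>q \<Longrightarrow> Cm n p q \<in> Sk (2*n) GG k"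
proof -
  assume k: "k\<in>{1..K}" and pq: "p\<in>{1..n}" "q\<in>{1..n}" "p\<noteq>q"
  show ?thesis
  proof (rule transport[where I="{1..n}" and u="Cm n" and v="Cm n" and pz=1 and qz=2])
    show "\<And>r s. r\<in>{1..n} \<Longrightarrow> s\<in>{1..n} \<Longrightarrow> r\<noteq>s \<Longrightarrow> Cm n r s \<in> Tk (2*n) GG k"
      using Cm_T k by blast
    show "\<And>r s p q. r\<in>{1..n} \<Longrightarrow> s\<in>{1..n} \<Longrightarrow> p\<in>{1..n} \<Longrightarrow> q\<in>{1..n} \<Longrightarrow> r\<noteq>s \<Longrightarrow> p\<noteq>q \<Longrightarrow>
       mbr (2*n) (Cm n r s) (Cm n p q) = madd (if s = p then Cm n r q else zm) (mscal (-1) (if q = r then Cm n p s else zm))"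
      by (rule Cm_Cm)
    show "\<And>p q. p\<in>{1..n} \<Longrightarrow> q\<in>{1..n} \<Longrightarrow> \<exists>r\<in>{1..n}. r\<noteq>p \<and> r\<noteq>q" by (rule three)
    show "(1::nat)\<in>{1..n}" "(2::nat)\<in>{1..n}" "(1::nat)\<noteq>2" using n3 by auto
    show "Cm n 1 2 \<in> Sk (2*n) GG k" by (rule X1_S[OF k])
  qed (use pq in auto)
qed

lemma Sk_scal_inv: "mscal c M \<in> Sk N G k \<Longrightarrow> c \<noteq> 0 \<Longrightarrow> M \<in> Sk N G k"
proof -
  assume h: "mscal c M \<in> Sk N G k" "c \<noteq> 0"
  have "mscal (inverse c) (mscal c M) \<in> Sk N G k" using h(1) by (rule Sk_scal)
  moreover have "mscal (inverse c) (mscal c M) = M" using h(2) by (auto simp: mscal_def intro!: ext)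
  ultimately show ?thesis by simp
qed

lemma sl_units:
  assumes k: "k\<in>{2..K}"
  shows "p\<in>{1..2*n} \<Longrightarrow> q\<in>{1..2*n} \<Longrightarrow> p\<noteq>q \<Longrightarrow> Eu p q \<in> Sk (2*n) GG k"
proof -
  have k1: "k\<in>{1..K}" using k by auto
  define c where "c = inverse (a k)"
  have ak: "a k \<noteq> 0" "a k \<noteq> 1" "a k \<noteq> -1" using anz adist a1 am1 k k1 K1 by fastforce+
  have c2: "1 - c*c \<noteq> 0"
  proof
    assume "1 - c*c = 0"
    then have "(1 - c) * (1 + c) = 0" by (simp add: algebra_simps)
    then have "1 - c = 0 \<or> 1 + c = 0" by simp
    then have "c = 1 \<or> c = -1" by (auto simp: add_eq_0_iff)
    moreover have "a k = inverse c" by (simp add: c_def)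
    ultimately show False using ak by auto
  qed
  note CS = Cm_S[OF k1] and CT = Cm_T[OF _ _ _ k1]
  have n2: "(2::nat) \<in> {1..n}" "(1::nat) \<in> {1..n}" "(3::nat) \<in> {1..n}" "n \<in> {1..n}" using n3 by auto
  have eT: "psi_e n (a k) n \<in> Tk (2*n) GG k" "psi_f n (a k) n \<in> Tk (2*n) GG k"
    using e_T f_T k1 n3 by auto
  have P: "madd (Eu 2 (n+1)) (mscal c (Eu 1 (n+2))) \<in> Sk (2*n) GG k"
    using Sk_br_right[OF CS[OF n2(1) n2(4)] eT(1)] n3 unfolding N1[OF n3] c_def by simp
  have Q1: "madd (Eu 2 (n+3)) (mscal c (Eu 3 (n+2))) \<in> Sk (2*n) GG k"
    using Sk_br_left[OF P CT[OF n2(3) n2(2)]] unfolding N2[OF n3] by simp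
  have Q2: "madd (Eu 1 (n+3)) (mscal c (Eu 3 (n+1))) \<in> Sk (2*n) GG k"
    using Sk_br_left[OF Q1 CT[OF n2(2) n2(1)]] unfolding N3[OF n3] by simp
  have Q3: "madd (Eu 1 (n+2)) (mscal c (Eu 2 (n+1))) \<in> Sk (2*n) GG k"
    using Sk_br_left[OF Q2 CT[OF n2(1) n2(3)]] unfolding N4[OF n3] by simp
  have "mscal (1 - c*c) (Eu 2 (n+1)) \<in> Sk (2*n) GG k"
    using Sk_add[OF P Sk_scal[OF Q3, of "-c"]] unfolding N5[OF n3] .
  then have E2: "Eu 2 (n+1) \<in> Sk (2*n) GG k" using c2 by (rule Sk_scal_inv)
  have E2n: "Eu 2 n \<in> Sk (2*n) GG k"
    using Sk_br_right[OF E2 eT(2)] unfolding N6[OF n3] .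
  have TL: "Eu p q \<in> Sk (2*n) GG k" if "p\<in>{1..n}" "q\<in>{1..n}" "p\<noteq>q" for p q
  proof (rule transport[where I="{1..n}" and u=Eu and v="Cm n" and pz=2 and qz=n])
    show "\<And>r s. r\<in>{1..n} \<Longrightarrow> s\<in>{1..n} \<Longrightarrow> r\<noteq>s \<Longrightarrow> Cm n r s \<in> Tk (2*n) GG k"
      using CT by blast
    show "\<And>r s p q. r\<in>{1..n} \<Longrightarrow> s\<in>{1..n} \<Longrightarrow> p\<in>{1..n} \<Longrightarrow> q\<in>{1..n} \<Longrightarrow> r\<noteq>s \<Longrightarrow> p\<noteq>q \<Longrightarrow>
       mbr (2*n) (Cm n r s) (Eu p q) = madd (if s = p then Eu r q else zm) (mscal (-1) (if q = r then Eu p s else zm))"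
      by (rule Cm_TL)
    show "\<And>p q. p\<in>{1..n} \<Longrightarrow> q\<in>{1..n} \<Longrightarrow> \<exists>r\<in>{1..n}. r\<noteq>p \<and> r\<noteq>q" by (rule three)
    show "(2::nat)\<in>{1..n}" "n\<in>{1..n}" "(2::nat)\<noteq>n" using n3 by auto
    show "Eu 2 n \<in> Sk (2*n) GG k" by (rule E2n)
  qed (use that in auto)
  have TR2: "Eu 2 (n+r) \<in> Sk (2*n) GG k" if "r\<in>{1..n}" for r
  proof (cases "r = 1")
    case True then show ?thesis using E2 by simp
  next
    case False
    have "mbr (2*n) (Cm n r 1) (Eu 2 (n+1)) = Eu 2 (n+r)"
      using Cm_TR[OF that n2(2) n2(1) n2(2)] by simp
    then show ?thesis using Sk_br_left[OF E2 CT[OF that n2(2) False]] by simp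
  qed
  have TR1: "Eu 1 (n+r) \<in> Sk (2*n) GG k" if "r\<in>{1..n}" for r
  proof -
    have a: "(1::nat) \<in> {1..2*n}" "(2::nat) \<in> {1..2*n}" "n+r \<in> {1..2*n}" using that n3 by auto
    have nr: "n + r \<noteq> 1" using n3 by simp
    have "mbr (2*n) (Eu 1 2) (Eu 2 (n+r)) = Eu 1 (n+r)" using Eu_Eu[OF a(1,2,2,3)] nr by simp
    then show ?thesis using Sk_br[OF TL[OF n2(2) n2(1)] TR2[OF that]] by simp
  qed
  have BL0: "Eu (n+1) 2 \<in> Sk (2*n) GG k"
    using Sk_br_left[OF TL[OF n2(4) n2(1)] eT(2)] n3 unfolding N7[OF n3] by simp
  have BL2: "Eu (n+s) 2 \<in> Sk (2*n) GG k" if "s\<in>{1..n}" for s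
  proof (cases "s = 1")
    case True then show ?thesis using BL0 by simp
  next
    case False
    have "mbr (2*n) (Cm n 1 s) (Eu (n+1) 2) = mscal (-1) (Eu (n+s) 2)"
      using Cm_BL[OF n2(2) that n2(2) n2(1)] by simp
    then have "mscal (-1) (Eu (n+s) 2) \<in> Sk (2*n) GG k"
      using Sk_br_left[OF BL0 CT[OF n2(2) that]] False by simp
    then show ?thesis by (rule Sk_scal_inv) simp
  qed
  have BL1: "Eu (n+s) 1 \<in> Sk (2*n) GG k" if "s\<in>{1..n}" for s
  proof -
    have a: "(1::nat) \<in> {1..2*n}" "(2::nat) \<in> {1..2*n}" "n+s \<in> {1..2*n}" using that n3 by auto
    have nr: "1 \<noteq> n + s" using n3 by simp
    have "mbr (2*n) (Eu (n+s) 2) (Eu 2 1) = Eu (n+s) 1" using Eu_Eu[OF a(3,2,2,1)] nr by simp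
    then show ?thesis using Sk_br[OF BL2[OF that] TL[OF n2(1) n2(2)]] by simp
  qed
  show "p\<in>{1..2*n} \<Longrightarrow> q\<in>{1..2*n} \<Longrightarrow> p\<noteq>q \<Longrightarrow> Eu p q \<in> Sk (2*n) GG k"
  proof (rule hub[where I="{1..2*n}" and h=1 and N="2*n" and u=Eu])
    show "\<And>x y. x \<in> Sk (2*n) GG k \<Longrightarrow> y \<in> Sk (2*n) GG k \<Longrightarrow> mbr (2*n) x y \<in> Sk (2*n) GG k"
      by (rule Sk_br)
    show "\<And>p q r. p\<in>{1..2*n} \<Longrightarrow> q\<in>{1..2*n} \<Longrightarrow> r\<in>{1..2*n} \<Longrightarrow> p\<noteq>q \<Longrightarrow> q\<noteq>r \<Longrightarrow> p\<noteq>r \<Longrightarrow>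
       mbr (2*n) (Eu p q) (Eu q r) = Eu p r"
      by (simp add: Eu_Eu)
    show "(1::nat)\<in>{1..2*n}" using n3 by simp
    show "Eu 1 x \<in> Sk (2*n) GG k \<and> Eu x 1 \<in> Sk (2*n) GG k" if "x\<in>{1..2*n}" "x\<noteq>1" for x
    proof (cases "x \<le> n")
      case True
      then show ?thesis using TL[of 1 x] TL[of x 1] that by auto
    next
      case False
      define r where "r = x - n"
      have r: "x = n + r" "r\<in>{1..n}" using that False unfolding r_def by auto
      then show ?thesis using TR1 BL1 by simp
    qed
  qed
qed

end

definition Gm :: "nat \<Rightarrow> nat \<Rightarrow> nat \<Rightarrow> cmat" where "Gm n p q = madd (Eu p (n+q)) (Eu q (n+p))"
definition Hm :: "nat \<Rightarrow> nat \<Rightarrow> nat \<Rightarrow> cmat" where "Hm n p q = madd (Eu (n+p) q) (Eu (n+q) p)"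

lemma Gm_sym: "Gm n p q = Gm n q p" by (auto simp: Gm_def madd_def intro!: ext)
lemma Hm_sym: "Hm n p q = Hm n q p" by (auto simp: Hm_def madd_def intro!: ext)

lemma Sk_scal_inv': "mscal c M \<in> Sk N G k \<Longrightarrow> c \<noteq> 0 \<Longrightarrow> M \<in> Sk N G k"
proof -
  assume h: "mscal c M \<in> Sk N G k" "c \<noteq> 0"
  have "mscal (inverse c) (mscal c M) \<in> Sk N G k" using h(1) by (rule Sk_scal)
  moreover have "mscal (inverse c) (mscal c M) = M" using h(2) by (auto simp: mscal_def intro!: ext)
  ultimately show ?thesis by simp
qed

lemma Cm_Gm:
  assumes "r \<in> {1..n}" "s \<in> {1..n}" "p \<in> {1..n}" "q \<in> {1..n}"
  shows "mbr (2*n) (Cm n r s) (Gm n p q) = madd (if s = p then Gm n r q else zm) (if s = q then Gm n r p else zm)"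
proof (intro ext)
  fix i j
  show "mbr (2*n) (Cm n r s) (Gm n p q) i j = madd (if s = p then Gm n r q else zm) (if s = q then Gm n r p else zm) i j"
    unfolding mbr_Cm_left[OF assms(1,2)] using assms by (simp add: Gm_def Eu_def madd_def zm_def)
qed

lemma Cm_Hm:
  assumes "r \<in> {1..n}" "s \<in> {1..n}" "p \<in> {1..n}" "q \<in> {1..n}"
  shows "mbr (2*n) (Cm n s r) (Hm n p q) = mscal (-1) (madd (if s = p then Hm n r q else zm) (if s = q then Hm n r p else zm))"
proof (intro ext)
  fix i j
  show "mbr (2*n) (Cm n s r) (Hm n p q) i j = mscal (-1) (madd (if s = p then Hm n r q else zm) (if s = q then Hm n r p else zm)) i j"
    unfolding mbr_Cm_left[OF assms(2,1)] using assms by (simp add: Hm_def Eu_def madd_def mscal_def zm_def)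
qed

lemma sp1:
  assumes "n \<ge> 3"
  shows "mbr (2*n) (Cm n 2 n) (psi_e n 1 n) = Gm n 2 1"
  unfolding N1[OF assms] by (simp add: Gm_def mscal_def)

lemma sp2:
  assumes "n \<ge> 3"
  shows "mbr (2*n) (Cm n n 2) (psi_f n 1 n) = mscal (-1) (Hm n 2 1)"
proof (intro ext)
  fix i j
  have a: "n \<in> {1..n}" "(2::nat) \<in> {1..n}" using assms by auto
  show "mbr (2*n) (Cm n n 2) (psi_f n 1 n) i j = mscal (-1) (Hm n 2 1) i j"
    unfolding mbr_Cm_left[OF a] psi_f_n using assms by (simp add: Hm_def Eu_def madd_def mscal_def)
qed

lemma GH:
  assumes "p \<in> {1..n}"
  shows "mbr (2*n) (Gm n p p) (Hm n p p) = mscal 4 (Cm n p p)"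
proof (intro ext)
  fix i j
  have a: "p \<in> {1..2*n}" "n+p \<in> {1..2*n}" using assms by auto
  show "mbr (2*n) (Gm n p p) (Hm n p p) i j = mscal 4 (Cm n p p) i j"
    unfolding Gm_def mbr_madd_left mbr_Eu_left[OF a] using assms
    by (simp add: Hm_def Cm_def Eu_def madd_def mscal_def)
qed

lemma sym_transport:
  fixes w v :: "nat \<Rightarrow> nat \<Rightarrow> cmat"
  assumes vT: "\<And>r s. r\<in>I \<Longrightarrow> s\<in>I \<Longrightarrow> r\<noteq>s \<Longrightarrow> v r s \<in> Tk N G k"
    and rel: "\<And>r s p q. r\<in>I \<Longrightarrow> s\<in>I \<Longrightarrow> p\<in>I \<Longrightarrow> q\<in>I \<Longrightarrow> r\<noteq>s \<Longrightarrow>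
       mbr N (v r s) (w p q) = mscal \<sigma> (madd (if s = p then w r q else zm) (if s = q then w r p else zm))"
    and sym: "\<And>p q. w p q = w q p" and sg: "\<sigma> \<noteq> 0"
    and start: "pz\<in>I" "qz\<in>I" "pz\<noteq>qz" "w pz qz \<in> Sk N G k"
  shows "p\<in>I \<Longrightarrow> q\<in>I \<Longrightarrow> w p q \<in> Sk N G k"
proof -
  have s1: "w r qz \<in> Sk N G k" if r: "r\<in>I" for r
  proof (cases "r = pz")
    case True then show ?thesis using start by simp
  next
    case False
    have e: "mbr N (v r pz) (w pz qz) = mscal \<sigma> (w r qz)"
      using rel[OF r(1) start(1) start(1) start(2) False] start(3) by simp
    have "mbr N (v r pz) (w pz qz) \<in> Sk N G k"
      by (rule Sk_br_left[OF start(4) vT[OF r(1) start(1) False]])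
    then show ?thesis unfolding e using sg by (rule Sk_scal_inv')
  qed
  have s2: "w p q \<in> Sk N G k" if pq: "p\<in>I" "q\<in>I" "p\<noteq>qz" "q\<noteq>qz" for p q
  proof -
    have e: "mbr N (v p qz) (w qz q) = mscal \<sigma> (w p q)"
      using rel[OF pq(1) start(2) start(2) pq(2) pq(3)] pq(4) by simp
    have "w qz q \<in> Sk N G k" using s1[OF pq(2)] sym[of qz q] by simp
    then have "mbr N (v p qz) (w qz q) \<in> Sk N G k"
      by (rule Sk_br_left[OF _ vT[OF pq(1) start(2) pq(3)]])
    then show ?thesis unfolding e using sg by (rule Sk_scal_inv')
  qed
  assume pq: "p\<in>I" "q\<in>I"
  show "w p q \<in> Sk N G k"
  proof (cases "q = qz")
    case True then show ?thesis using s1[OF pq(1)] by simp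
  next
    case False
    show ?thesis
    proof (cases "p = qz")
      case True then show ?thesis using s1[OF pq(2)] sym[of p q] by simp
    next
      case F2: False
      show ?thesis by (rule s2[OF pq F2 False])
    qed
  qed
qed

context LS begin

lemma sp_gens:
  assumes p: "p\<in>{1..n}" and q: "q\<in>{1..n}"
  shows "Gm n p q \<in> Sk (2*n) GG 1" "Hm n p q \<in> Sk (2*n) GG 1" "Cm n p q \<in> Sk (2*n) GG 1"
proof -
  have k1: "(1::nat)\<in>{1..K}" using K1 by simp
  note CS = Cm_S[OF k1] and CT = Cm_T[OF _ _ _ k1]
  have n2: "(2::nat) \<in> {1..n}" "(1::nat) \<in> {1..n}" "n \<in> {1..n}" "(2::nat) \<noteq> 1" using n3 by auto
  have eT: "psi_e n 1 n \<in> Tk (2*n) GG 1" "psi_f n 1 n \<in> Tk (2*n) GG 1"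
    using e_T[of n 1] f_T[of n 1] k1 n3 a1 by auto
  have G21: "Gm n 2 1 \<in> Sk (2*n) GG 1"
    using Sk_br_right[OF CS[OF n2(1) n2(3)] eT(1)] n3 unfolding sp1[OF n3] by simp
  have "mscal (-1) (Hm n 2 1) \<in> Sk (2*n) GG 1"
    using Sk_br_right[OF CS[OF n2(3) n2(1)] eT(2)] n3 unfolding sp2[OF n3] by simp
  then have H21: "Hm n 2 1 \<in> Sk (2*n) GG 1" by (rule Sk_scal_inv') simp
  show G: "Gm n p q \<in> Sk (2*n) GG 1"
  proof (rule sym_transport[where I="{1..n}" and w="Gm n" and v="Cm n" and pz=2 and qz=1 and \<sigma>=1])
    show "\<And>r s. r\<in>{1..n} \<Longrightarrow> s\<in>{1..n} \<Longrightarrow> r\<noteq>s \<Longrightarrow> Cm n r s \<in> Tk (2*n) GG 1"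
      using CT by blast
    show "\<And>r s p q. r\<in>{1..n} \<Longrightarrow> s\<in>{1..n} \<Longrightarrow> p\<in>{1..n} \<Longrightarrow> q\<in>{1..n} \<Longrightarrow> r\<noteq>s \<Longrightarrow>
       mbr (2*n) (Cm n r s) (Gm n p q) = mscal 1 (madd (if s = p then Gm n r q else zm) (if s = q then Gm n r p else zm))"
      by (simp add: Cm_Gm mscal_def)
  qed (use n2 G21 p q Gm_sym in auto)
  show H: "Hm n p q \<in> Sk (2*n) GG 1"
  proof (rule sym_transport[where I="{1..n}" and w="Hm n" and v="\<lambda>r s. Cm n s r" and pz=2 and qz=1 and \<sigma>="-1"])
    show "\<And>r s. r\<in>{1..n} \<Longrightarrow> s\<in>{1..n} \<Longrightarrow> r\<noteq>s \<Longrightarrow> Cm n s r \<in> Tk (2*n) GG 1"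
      using CT by metis
    show "\<And>r s p q. r\<in>{1..n} \<Longrightarrow> s\<in>{1..n} \<Longrightarrow> p\<in>{1..n} \<Longrightarrow> q\<in>{1..n} \<Longrightarrow> r\<noteq>s \<Longrightarrow>
       mbr (2*n) (Cm n s r) (Hm n p q) = mscal (-1) (madd (if s = p then Hm n r q else zm) (if s = q then Hm n r p else zm))"
      by (rule Cm_Hm)
  qed (use n2 H21 p q Hm_sym in auto)
  show "Cm n p q \<in> Sk (2*n) GG 1"
  proof (cases "p = q")
    case False then show ?thesis using CS p q by blast
  next
    case True
    have "Gm n p p \<in> Sk (2*n) GG 1" "Hm n p p \<in> Sk (2*n) GG 1"
      using G H True by simp_all
    then have "mscal 4 (Cm n p p) \<in> Sk (2*n) GG 1" using Sk_br GH[OF p] by metis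
    then have "Cm n p p \<in> Sk (2*n) GG 1" by (rule Sk_scal_inv') simp
    then show ?thesis using True by simp
  qed
qed

end

definition pin :: "nat \<Rightarrow> nat \<Rightarrow> nat" where "pin n x = (if x \<le> n then x + n else x - n)"
definition sg :: "nat \<Rightarrow> nat \<Rightarrow> complex" where "sg n x = (if x \<le> n then 1 else -1)"

lemma pin_R: "x \<in> {1..2*n} \<Longrightarrow> pin n x \<in> {1..2*n}" by (auto simp: pin_def)
lemma pin_pin: "x \<in> {1..2*n} \<Longrightarrow> pin n (pin n x) = x" by (auto simp: pin_def)
lemma sg_pin: "x \<in> {1..2*n} \<Longrightarrow> sg n (pin n x) = - sg n x" by (auto simp: pin_def sg_def)
lemma sg_sq: "sg n x * sg n x = 1" by (simp add: sg_def)

lemma J1: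
  assumes "j \<in> {1..2*n}"
  shows "(\<Sum>l\<in>{1..2*n}. X l i * Jsym n l j) = - sg n j * X (pin n j) i"
proof -
  have "(\<Sum>l\<in>{1..2*n}. X l i * Jsym n l j) = (\<Sum>l\<in>{1..2*n}. if l = pin n j then - sg n j * X (pin n j) i else 0)"
    by (rule sum.cong) (use assms in \<open>auto simp: Jsym_def pin_def sg_def\<close>)
  also have "\<dots> = - sg n j * X (pin n j) i" using pin_R[OF assms] by (simp add: sum.delta)
  finally show ?thesis .
qed

lemma J2:
  assumes "i \<in> {1..2*n}"
  shows "(\<Sum>l\<in>{1..2*n}. Jsym n i l * X l j) = sg n i * X (pin n i) j"
proof -
  have "(\<Sum>l\<in>{1..2*n}. Jsym n i l * X l j) = (\<Sum>l\<in>{1..2*n}. if l = pin n i then sg n i * X (pin n i) j else 0)"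
    by (rule sum.cong) (use assms in \<open>auto simp: Jsym_def pin_def sg_def\<close>)
  also have "\<dots> = sg n i * X (pin n i) j" using pin_R[OF assms] by (simp add: sum.delta)
  finally show ?thesis .
qed

lemma sp_char: "is_sp n X \<longleftrightarrow> supp_ok (2*n) X \<and>
   (\<forall>i\<in>{1..2*n}. \<forall>j\<in>{1..2*n}. sg n i * X (pin n i) j = sg n j * X (pin n j) i)"
proof -
  have "(\<Sum>l\<in>{1..2*n}. X l i * Jsym n l j + Jsym n i l * X l j) = sg n i * X (pin n i) j - sg n j * X (pin n j) i"
    if "i \<in> {1..2*n}" "j \<in> {1..2*n}" for i j
    using J1[OF that(2), of X i] J2[OF that(1), of X j] by (simp add: sum.distrib)
  then show ?thesis unfolding is_sp_def by (auto simp: right_minus_eq)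
qed

lemma sp_refl:
  assumes "is_sp n M" "i \<in> {1..2*n}" "j \<in> {1..2*n}"
  shows "M i j = - (sg n i * sg n j) * M (pin n j) (pin n i)"
proof -
  have "sg n (pin n i) * M (pin n (pin n i)) j = sg n j * M (pin n j) (pin n i)"
    using assms pin_R[OF assms(2)] unfolding sp_char by blast
  then have "- sg n i * M i j = sg n j * M (pin n j) (pin n i)"
    using pin_pin[OF assms(2)] sg_pin[OF assms(2)] by simp
  then have "sg n i * (- sg n i * M i j) = sg n i * (sg n j * M (pin n j) (pin n i))" by simp
  moreover have "sg n i * (- sg n i * M i j) = - M i j"
    using sg_sq[of n i] by (simp add: mult.assoc[symmetric])
  ultimately have "- M i j = sg n i * (sg n j * M (pin n j) (pin n i))" by simp
  then have "- (- M i j) = - (sg n i * (sg n j * M (pin n j) (pin n i)))" by (rule arg_cong)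
  then have "M i j = - (sg n i * (sg n j * M (pin n j) (pin n i)))" by (simp only: minus_minus)
  then show ?thesis by (simp add: mult.assoc)
qed

definition Fm :: "nat \<Rightarrow> nat \<Rightarrow> nat \<Rightarrow> cmat" where
  "Fm n p q = madd (Eu p q) (mscal (-(sg n p * sg n q)) (Eu (pin n q) (pin n p)))"

lemma Fm1: "p \<le> n \<Longrightarrow> q \<le> n \<Longrightarrow> Fm n p q = Cm n p q"
  by (intro ext) (simp add: Fm_def Cm_def pin_def sg_def Eu_def madd_def mscal_def add.commute)
lemma Fm2: "p \<le> n \<Longrightarrow> n < q \<Longrightarrow> Fm n p q = Gm n p (q - n)"
  by (intro ext) (simp add: Fm_def Gm_def pin_def sg_def Eu_def madd_def mscal_def add.commute)
lemma Fm3: "n < p \<Longrightarrow> q \<le> n \<Longrightarrow> Fm n p q = Hm n (p - n) q"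
  by (intro ext) (simp add: Fm_def Hm_def pin_def sg_def Eu_def madd_def mscal_def add.commute)
lemma Fm4: "n < p \<Longrightarrow> n < q \<Longrightarrow> Fm n p q = mscal (-1) (Cm n (q - n) (p - n))"
  by (intro ext) (simp add: Fm_def Cm_def pin_def sg_def Eu_def madd_def mscal_def add.commute)

lemma sp_span:
  assumes "is_sp n M"
  shows "M = mscal (1/2) (msum (\<lambda>x. mscal (M (fst x) (snd x)) (Fm n (fst x) (snd x))) ({1..2*n} \<times> {1..2*n}))"
proof (intro ext)
  fix i j
  let ?R = "{1..2*n}"
  have sum_split: "msum (\<lambda>x. mscal (M (fst x) (snd x)) (Fm n (fst x) (snd x))) (?R \<times> ?R) i j =
     (\<Sum>x\<in>?R\<times>?R. M (fst x) (snd x) * Eu (fst x) (snd x) i j) +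
     (\<Sum>x\<in>?R\<times>?R. M (fst x) (snd x) * (-(sg n (fst x) * sg n (snd x))) * Eu (pin n (snd x)) (pin n (fst x)) i j)"
    by (simp add: msum_def Fm_def madd_def mscal_def sum.distrib[symmetric] algebra_simps)
  have s1: "(\<Sum>x\<in>?R\<times>?R. M (fst x) (snd x) * Eu (fst x) (snd x) i j) = (if (i,j) \<in> ?R\<times>?R then M i j else 0)"
  proof -
    have "(\<Sum>x\<in>?R\<times>?R. M (fst x) (snd x) * Eu (fst x) (snd x) i j) = (\<Sum>x\<in>?R\<times>?R. if x = (i,j) then M i j else 0)"
      by (rule sum.cong) (auto simp: Eu_def)
    then show ?thesis by (simp add: sum.delta')
  qed
  show "M i j = mscal (1/2) (msum (\<lambda>x. mscal (M (fst x) (snd x)) (Fm n (fst x) (snd x))) (?R \<times> ?R)) i j"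
  proof (cases "i \<in> ?R \<and> j \<in> ?R")
    case True
    have s2: "(\<Sum>x\<in>?R\<times>?R. M (fst x) (snd x) * (-(sg n (fst x) * sg n (snd x))) * Eu (pin n (snd x)) (pin n (fst x)) i j)
        = (\<Sum>x\<in>?R\<times>?R. if x = (pin n j, pin n i) then M (pin n j) (pin n i) * (-(sg n (pin n j) * sg n (pin n i))) else 0)"
    proof (rule sum.cong)
      fix x assume x: "x \<in> ?R \<times> ?R"
      have "(i = pin n (snd x) \<and> j = pin n (fst x)) \<longleftrightarrow> x = (pin n j, pin n i)"
        using x True pin_pin[of "fst x" n] pin_pin[of "snd x" n] pin_pin[of i n] pin_pin[of j n]
        by (cases x) auto
      then show "M (fst x) (snd x) * (-(sg n (fst x) * sg n (snd x))) * Eu (pin n (snd x)) (pin n (fst x)) i j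
         = (if x = (pin n j, pin n i) then M (pin n j) (pin n i) * (-(sg n (pin n j) * sg n (pin n i))) else 0)"
        by (auto simp: Eu_def)
    qed simp
    also have "\<dots> = M (pin n j) (pin n i) * (-(sg n (pin n j) * sg n (pin n i)))"
      using pin_R True by (simp add: sum.delta')
    also have "\<dots> = M i j"
      using sp_refl[OF assms, of i j] True sg_pin[of i n] sg_pin[of j n] by (simp add: algebra_simps)
    finally have "msum (\<lambda>x. mscal (M (fst x) (snd x)) (Fm n (fst x) (snd x))) (?R \<times> ?R) i j = M i j + M i j"
      using True unfolding sum_split s1 by simp
    then show ?thesis by (simp add: mscal_def)
  next
    case False
    have s2: "(\<Sum>x\<in>?R\<times>?R. M (fst x) (snd x) * (-(sg n (fst x) * sg n (snd x))) * Eu (pin n (snd x)) (pin n (fst x)) i j) = 0"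
    proof (rule sum.neutral, intro ballI)
      fix x assume x: "x \<in> ?R \<times> ?R"
      have "pin n (snd x) \<in> ?R" "pin n (fst x) \<in> ?R" using x pin_R by auto
      then show "M (fst x) (snd x) * (-(sg n (fst x) * sg n (snd x))) * Eu (pin n (snd x)) (pin n (fst x)) i j = 0"
        using False by (auto simp: Eu_def)
    qed
    have "M i j = 0" using assms False unfolding is_sp_def supp_ok_def by blast
    moreover have "msum (\<lambda>x. mscal (M (fst x) (snd x)) (Fm n (fst x) (snd x))) (?R \<times> ?R) i j = 0"
      unfolding sum_split s1 s2 using False by auto
    ultimately show ?thesis by (simp add: mscal_def)
  qed
qed

lemma sl_span:
  assumes "is_sl N M"
  shows "M = madd (msum (\<lambda>x. mscal (M (fst x) (snd x)) (Eu (fst x) (snd x))) {x\<in>{1..N}\<times>{1..N}. fst x \<noteq> snd x})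
                  (msum (\<lambda>p. mscal (M p p) (madd (Eu p p) (mscal (-1) (Eu N N)))) {1..N})"
proof (intro ext)
  fix i j
  let ?R = "{1..N}" let ?O = "{x\<in>{1..N}\<times>{1..N}. fst x \<noteq> snd x}"
  have s1: "(\<Sum>x\<in>?O. M (fst x) (snd x) * Eu (fst x) (snd x) i j) = (if (i,j) \<in> ?O then M i j else 0)"
  proof -
    have "(\<Sum>x\<in>?O. M (fst x) (snd x) * Eu (fst x) (snd x) i j) = (\<Sum>x\<in>?O. if x = (i,j) then M i j else 0)"
      by (rule sum.cong) (auto simp: Eu_def)
    moreover have "finite ?O" by (rule finite_subset[of _ "?R\<times>?R"]) auto
    ultimately show ?thesis by (simp add: sum.delta')
  qed
  have tr: "(\<Sum>p\<in>?R. M p p) = 0" using assms by (simp add: is_sl_def)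
  have s2: "(\<Sum>p\<in>?R. M p p * (Eu p p i j - Eu N N i j)) = (if i = j \<and> i \<in> ?R then M i i else 0)"
  proof -
    have a: "(\<Sum>p\<in>?R. M p p * Eu p p i j) = (\<Sum>p\<in>?R. if p = i then (if i = j then M i i else 0) else 0)"
      by (rule sum.cong) (auto simp: Eu_def)
    have b: "(\<Sum>p\<in>?R. M p p * Eu N N i j) = (\<Sum>p\<in>?R. M p p) * Eu N N i j"
      by (simp add: sum_distrib_right)
    have "(\<Sum>p\<in>?R. M p p * (Eu p p i j - Eu N N i j)) = (\<Sum>p\<in>?R. M p p * Eu p p i j) - (\<Sum>p\<in>?R. M p p * Eu N N i j)"
      by (simp add: right_diff_distrib sum_subtractf)
    also have "\<dots> = (\<Sum>p\<in>?R. if p = i then (if i = j then M i i else 0) else 0)"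
      unfolding a b tr by simp
    finally show ?thesis by (simp add: sum.delta)
  qed
  have "madd (msum (\<lambda>x. mscal (M (fst x) (snd x)) (Eu (fst x) (snd x))) ?O)
          (msum (\<lambda>p. mscal (M p p) (madd (Eu p p) (mscal (-1) (Eu N N)))) ?R) i j
      = (\<Sum>x\<in>?O. M (fst x) (snd x) * Eu (fst x) (snd x) i j) + (\<Sum>p\<in>?R. M p p * (Eu p p i j - Eu N N i j))"
    by (simp add: madd_def msum_def mscal_def algebra_simps)
  also have "\<dots> = M i j"
  proof (cases "i \<in> ?R \<and> j \<in> ?R")
    case True then show ?thesis unfolding s1 s2 by auto
  next
    case False
    then have "M i j = 0" using assms unfolding is_sl_def supp_ok_def by blast
    then show ?thesis unfolding s1 s2 using False by auto
  qed
  finally show "M i j = madd (msum (\<lambda>x. mscal (M (fst x) (snd x)) (Eu (fst x) (snd x))) ?O)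
          (msum (\<lambda>p. mscal (M p p) (madd (Eu p p) (mscal (-1) (Eu N N)))) ?R) i j" by simp
qed

context LS begin

lemma Fm_S: "p\<in>{1..2*n} \<Longrightarrow> q\<in>{1..2*n} \<Longrightarrow> Fm n p q \<in> Sk (2*n) GG 1"
proof -
  assume p: "p\<in>{1..2*n}" and q: "q\<in>{1..2*n}"
  show ?thesis
  proof (cases "p \<le> n")
    case True
    then have p1: "p \<in> {1..n}" using p by auto
    show ?thesis
    proof (cases "q \<le> n")
      case True
      then have q1: "q \<in> {1..n}" using q by auto
      show ?thesis unfolding Fm1[OF \<open>p \<le> n\<close> True] by (rule sp_gens(3)[OF p1 q1])
    next
      case False
      then have q1: "q - n \<in> {1..n}" using q by auto
      have nq: "n < q" using False by simp
      show ?thesis unfolding Fm2[OF \<open>p \<le> n\<close> nq] by (rule sp_gens(1)[OF p1 q1])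
    qed
  next
    case False
    then have p1: "p - n \<in> {1..n}" using p by auto
    show ?thesis
    proof (cases "q \<le> n")
      case True
      then have q1: "q \<in> {1..n}" using q by auto
      have np: "n < p" using False by simp
      show ?thesis unfolding Fm3[OF np True] by (rule sp_gens(2)[OF p1 q1])
    next
      case F2: False
      then have q1: "q - n \<in> {1..n}" using q by auto
      have "mscal (-1) (Cm n (q - n) (p - n)) \<in> Sk (2*n) GG 1" by (rule Sk_scal[OF sp_gens(3)[OF q1 p1]])
      then show ?thesis using F2 False Fm4[of n p q] by simp
    qed
  qed
qed

lemma sp_in: "is_sp n M \<Longrightarrow> M \<in> Sk (2*n) GG 1"
proof -
  assume h: "is_sp n M"
  have "msum (\<lambda>x. mscal (M (fst x) (snd x)) (Fm n (fst x) (snd x))) ({1..2*n} \<times> {1..2*n}) \<in> Sk (2*n) GG 1"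
  proof (rule Sk_msum)
    fix x assume x: "x \<in> {1..2*n} \<times> {1..2*n}"
    show "mscal (M (fst x) (snd x)) (Fm n (fst x) (snd x)) \<in> Sk (2*n) GG 1"
      by (rule Sk_scal, rule Fm_S) (use x in auto)
  qed simp
  then have "mscal (1/2) (msum (\<lambda>x. mscal (M (fst x) (snd x)) (Fm n (fst x) (snd x))) ({1..2*n} \<times> {1..2*n})) \<in> Sk (2*n) GG 1"
    by (rule Sk_scal)
  then show ?thesis using sp_span[OF h] by simp
qed

lemma diag_S: "k\<in>{2..K} \<Longrightarrow> p\<in>{1..2*n} \<Longrightarrow> madd (Eu p p) (mscal (-1) (Eu (2*n) (2*n))) \<in> Sk (2*n) GG k"
proof -
  assume k: "k\<in>{2..K}" and p: "p\<in>{1..2*n}"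
  show ?thesis
  proof (cases "p = 2*n")
    case True
    have "madd (Eu p p) (mscal (-1) (Eu (2*n) (2*n))) = zm"
      using True by (auto simp: madd_def mscal_def zm_def Eu_def intro!: ext)
    then show ?thesis using Sk_zero by simp
  next
    case False
    have a: "p \<in> {1..2*n}" "2*n \<in> {1..2*n}" using p n3 by auto
    have "mbr (2*n) (Eu p (2*n)) (Eu (2*n) p) = madd (Eu p p) (mscal (-1) (Eu (2*n) (2*n)))"
      using Eu_Eu[OF a(1,2,2,1)] by simp
    moreover have "mbr (2*n) (Eu p (2*n)) (Eu (2*n) p) \<in> Sk (2*n) GG k"
      using sl_units[OF k] a False by (intro Sk_br) auto
    ultimately show ?thesis by simp
  qed
qed

lemma sl_in: "k\<in>{2..K} \<Longrightarrow> is_sl (2*n) M \<Longrightarrow> M \<in> Sk (2*n) GG k"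
proof -
  assume k: "k\<in>{2..K}" and h: "is_sl (2*n) M"
  have fin: "finite {x\<in>{1..2*n}\<times>{1..2*n}. fst x \<noteq> snd x}"
    by (rule finite_subset[of _ "{1..2*n}\<times>{1..2*n}"]) auto
  have "msum (\<lambda>x. mscal (M (fst x) (snd x)) (Eu (fst x) (snd x))) {x\<in>{1..2*n}\<times>{1..2*n}. fst x \<noteq> snd x} \<in> Sk (2*n) GG k"
    using fin by (rule Sk_msum) (auto intro!: Sk_scal sl_units[OF k])
  moreover have "msum (\<lambda>p. mscal (M p p) (madd (Eu p p) (mscal (-1) (Eu (2*n) (2*n))))) {1..2*n} \<in> Sk (2*n) GG k"
    by (rule Sk_msum) (auto intro!: Sk_scal diag_S[OF k])
  ultimately have "madd (msum (\<lambda>x. mscal (M (fst x) (snd x)) (Eu (fst x) (snd x))) {x\<in>{1..2*n}\<times>{1..2*n}. fst x \<noteq> snd x})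
    (msum (\<lambda>p. mscal (M p p) (madd (Eu p p) (mscal (-1) (Eu (2*n) (2*n))))) {1..2*n}) \<in> Sk (2*n) GG k"
    by (rule Sk_add)
  then show ?thesis using sl_span[OF h] by simp
qed

lemma sup: "sp_sl_sum n K \<subseteq> lie_gen (2*n) GG"
proof
  fix X assume X: "X \<in> sp_sl_sum n K"
  have comp: "ins k (X k) \<in> lie_gen (2*n) GG" if k: "k \<in> {1..K}" for k
  proof (cases "k = 1")
    case True
    then have "is_sp n (X k)" using X by (simp add: sp_sl_sum_def)
    then show ?thesis using sp_in True by (simp add: Sk_def)
  next
    case False
    then have k2: "k \<in> {2..K}" using k by auto
    then have "is_sl (2*n) (X k)" using X by (simp add: sp_sl_sum_def)
    then show ?thesis using sl_in[OF k2] by (simp add: Sk_def)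
  qed
  have "vsum (\<lambda>k. ins k (X k)) {1..K} \<in> lie_gen (2*n) GG"
    by (rule lie_gen_vsum) (use comp in auto)
  moreover have "vsum (\<lambda>k. ins k (X k)) {1..K} = X"
  proof (intro ext)
    fix k i j
    show "vsum (\<lambda>k. ins k (X k)) {1..K} k i j = X k i j"
    proof (cases "k \<in> {1..K}")
      case True
      have "(\<Sum>x\<in>{1..K}. ins x (X x) k i j) = (\<Sum>x\<in>{1..K}. if x = k then X k i j else 0)"
        by (rule sum.cong) (auto simp: ins_def zm_def)
      then show ?thesis using True by (simp add: vsum_def)
    next
      case False
      have "X k = zm" using X False by (simp add: sp_sl_sum_def zm_def)
      moreover have "(\<Sum>x\<in>{1..K}. ins x (X x) k i j) = 0"
        using False by (intro sum.neutral) (auto simp: ins_def zm_def)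
      ultimately show ?thesis by (simp add: vsum_def zm_def)
    qed
  qed
  ultimately show "X \<in> lie_gen (2*n) GG" by simp
qed

end

lemma pin_eq: "a\<in>{1..2*n} \<Longrightarrow> b\<in>{1..2*n} \<Longrightarrow> (pin n a = b) = (a = pin n b)"
  by (auto simp: pin_def)
lemma pin_inj: "a\<in>{1..2*n} \<Longrightarrow> b\<in>{1..2*n} \<Longrightarrow> (pin n a = pin n b) = (a = b)"
  by (auto simp: pin_def)

lemma Fm_val:
  assumes p: "p\<in>{1..2*n}" and q: "q\<in>{1..2*n}" and i: "i\<in>{1..2*n}"
  shows "Fm n p q (pin n i) j = (if i = pin n p \<and> j = q then 1 else 0)
     - (if i = q \<and> j = pin n p then sg n p * sg n q else 0)"
proof -
  have "Fm n p q (pin n i) j = (if pin n i = p \<and> j = q then 1 else 0)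
      - (if pin n i = pin n q \<and> j = pin n p then sg n p * sg n q else 0)"
    by (simp add: Fm_def Eu_def madd_def mscal_def)
  also have "\<dots> = (if i = pin n p \<and> j = q then 1 else 0) - (if i = q \<and> j = pin n p then sg n p * sg n q else 0)"
    unfolding pin_eq[OF i p] pin_inj[OF i q] ..
  finally show ?thesis .
qed

lemma Fm_sp:
  assumes p: "p\<in>{1..2*n}" and q: "q\<in>{1..2*n}"
  shows "is_sp n (Fm n p q)"
  unfolding sp_char
proof (intro conjI ballI)
  show "supp_ok (2*n) (Fm n p q)"
    unfolding supp_ok_def
  proof (intro allI impI)
    fix i j assume o: "i \<notin> {1..2*n} \<or> j \<notin> {1..2*n}"
    have "pin n q \<in> {1..2*n}" "pin n p \<in> {1..2*n}" using pin_R p q by auto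
    then have "Eu p q i j = 0" "Eu (pin n q) (pin n p) i j = 0" using o p q by (auto simp: Eu_def)
    then show "Fm n p q i j = 0" by (simp add: Fm_def madd_def mscal_def)
  qed
  fix i j assume i: "i\<in>{1..2*n}" and j: "j\<in>{1..2*n}"
  show "sg n i * Fm n p q (pin n i) j = sg n j * Fm n p q (pin n j) i"
  proof (cases "i = j")
    case True then show ?thesis by simp
  next
    case False
    have sp: "sg n (pin n p) = - sg n p" by (rule sg_pin[OF p])
    have sq: "sg n q * sg n q = 1" "sg n p * sg n p = 1" by (rule sg_sq)+
    note v = Fm_val[OF p q i, of j] Fm_val[OF p q j, of i]
    consider (A) "i = pin n p \<and> j = q" | (B) "i = q \<and> j = pin n p" | (C) "\<not> (i = pin n p \<and> j = q)" "\<not> (i = q \<and> j = pin n p)"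
      by blast
    then show ?thesis
    proof cases
      case A
      then have nB: "\<not> (i = q \<and> j = pin n p)" using False by auto
      have nB2: "\<not> (j = pin n p \<and> i = q)" using nB by blast
      have A2: "j = q \<and> i = pin n p" using A by blast
      have "Fm n p q (pin n i) j = 1" unfolding v(1) if_P[OF A] if_not_P[OF nB] by simp
      moreover have "Fm n p q (pin n j) i = - (sg n p * sg n q)" unfolding v(2) if_P[OF A2] if_not_P[OF nB2] by simp
      ultimately show ?thesis using A sp sq
        by (simp add: algebra_simps)
    next
      case B
      then have nA: "\<not> (i = pin n p \<and> j = q)" using False by auto
      have nA2: "\<not> (j = q \<and> i = pin n p)" using nA by blast
      have B2: "j = pin n p \<and> i = q" using B by blast
      have "Fm n p q (pin n i) j = - (sg n p * sg n q)" unfolding v(1) if_P[OF B] if_not_P[OF nA] by simp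
      moreover have "Fm n p q (pin n j) i = 1" unfolding v(2) if_P[OF B2] if_not_P[OF nA2] by simp
      ultimately show ?thesis using B sp sq
        by (simp add: algebra_simps)
    next
      case C
      have C2: "\<not> (j = pin n p \<and> i = q)" "\<not> (j = q \<and> i = pin n p)" using C by blast+
      have "Fm n p q (pin n i) j = 0" unfolding v(1) if_not_P[OF C(1)] if_not_P[OF C(2)] by simp
      moreover have "Fm n p q (pin n j) i = 0" unfolding v(2) if_not_P[OF C2(1)] if_not_P[OF C2(2)] by simp
      ultimately show ?thesis by simp
    qed
  qed
qed

lemma sl_diag0: "supp_ok N X \<Longrightarrow> (\<And>l. X l l = 0) \<Longrightarrow> is_sl N X"
  by (simp add: is_sl_def)

lemma supp_add: "supp_ok N X \<Longrightarrow> supp_ok N Y \<Longrightarrow> supp_ok N (madd X Y)"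
  by (simp add: supp_ok_def madd_def)
lemma supp_scal: "supp_ok N X \<Longrightarrow> supp_ok N (mscal c X)"
  by (simp add: supp_ok_def mscal_def)
lemma supp_br: "supp_ok N X \<Longrightarrow> supp_ok N Y \<Longrightarrow> supp_ok N (mbr N X Y)"
  unfolding supp_ok_def mbr_def
proof (intro allI impI)
  fix i j assume X: "\<forall>i j. (i \<notin> {1..N} \<or> j \<notin> {1..N}) \<longrightarrow> X i j = 0"
    and Y: "\<forall>i j. (i \<notin> {1..N} \<or> j \<notin> {1..N}) \<longrightarrow> Y i j = 0"
    and o: "i \<notin> {1..N} \<or> j \<notin> {1..N}"
  show "(\<Sum>l\<in>{1..N}. X i l * Y l j - Y i l * X l j) = 0"
    by (rule sum.neutral) (use X Y o in auto)
qed

lemma sl_add: "is_sl N X \<Longrightarrow> is_sl N Y \<Longrightarrow> is_sl N (madd X Y)"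
  unfolding is_sl_def using supp_add by (simp add: madd_def sum.distrib)
lemma sl_scal: "is_sl N X \<Longrightarrow> is_sl N (mscal c X)"
  unfolding is_sl_def using supp_scal by (simp add: mscal_def sum_distrib_left[symmetric])
lemma sl_br: "is_sl N X \<Longrightarrow> is_sl N Y \<Longrightarrow> is_sl N (mbr N X Y)"
proof -
  assume "is_sl N X" "is_sl N Y"
  then have s: "supp_ok N (mbr N X Y)" by (simp add: is_sl_def supp_br)
  have "(\<Sum>i\<in>{1..N}. mbr N X Y i i) = (\<Sum>i\<in>{1..N}. \<Sum>l\<in>{1..N}. X i l * Y l i) - (\<Sum>i\<in>{1..N}. \<Sum>l\<in>{1..N}. Y i l * X l i)"
    by (simp add: mbr_def sum_subtractf)
  also have "(\<Sum>i\<in>{1..N}. \<Sum>l\<in>{1..N}. Y i l * X l i) = (\<Sum>i\<in>{1..N}. \<Sum>l\<in>{1..N}. X i l * Y l i)"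
    by (subst sum.swap) (simp add: mult.commute)
  finally show ?thesis using s by (simp add: is_sl_def)
qed

lemma sp_add: "is_sp n X \<Longrightarrow> is_sp n Y \<Longrightarrow> is_sp n (madd X Y)"
  unfolding sp_char using supp_add by (simp add: madd_def distrib_left)
lemma sp_scal: "is_sp n X \<Longrightarrow> is_sp n (mscal c X)"
  unfolding sp_char using supp_scal by (simp add: mscal_def mult.left_commute)

lemma sum_pin: "(\<Sum>l\<in>{1..2*n}. f l) = (\<Sum>l\<in>{1..2*n}. f (pin n l))"
  by (rule sum.reindex_bij_witness[of _ "pin n" "pin n"]) (auto simp: pin_def)

lemma sp_key:
  assumes X: "is_sp n X" and Y: "is_sp n Y" and i: "i\<in>{1..2*n}" and j: "j\<in>{1..2*n}"
  shows "sg n i * (\<Sum>l\<in>{1..2*n}. X (pin n i) l * Y l j) = - sg n j * (\<Sum>l\<in>{1..2*n}. Y (pin n j) l * X l i)"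
proof -
  have cX: "\<And>a b. a\<in>{1..2*n} \<Longrightarrow> b\<in>{1..2*n} \<Longrightarrow> sg n a * X (pin n a) b = sg n b * X (pin n b) a"
    using X unfolding sp_char by blast
  have cY: "\<And>a b. a\<in>{1..2*n} \<Longrightarrow> b\<in>{1..2*n} \<Longrightarrow> sg n a * Y (pin n a) b = sg n b * Y (pin n b) a"
    using Y unfolding sp_char by blast
  have "sg n i * (\<Sum>l\<in>{1..2*n}. X (pin n i) l * Y l j) = (\<Sum>l\<in>{1..2*n}. (sg n i * X (pin n i) l) * Y l j)"
    by (simp add: sum_distrib_left mult.assoc)
  also have "\<dots> = (\<Sum>l\<in>{1..2*n}. sg n l * X (pin n l) i * Y l j)"
    by (rule sum.cong) (use cX i in auto)
  also have "\<dots> = (\<Sum>l\<in>{1..2*n}. sg n (pin n l) * X (pin n (pin n l)) i * Y (pin n l) j)"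
    by (rule sum_pin)
  also have "\<dots> = (\<Sum>l\<in>{1..2*n}. - (X l i * (sg n l * Y (pin n l) j)))"
    by (rule sum.cong) (auto simp: pin_pin sg_pin)
  also have "\<dots> = (\<Sum>l\<in>{1..2*n}. - (X l i * (sg n j * Y (pin n j) l)))"
    by (rule sum.cong) (use cY j in auto)
  also have "\<dots> = - sg n j * (\<Sum>l\<in>{1..2*n}. Y (pin n j) l * X l i)"
    by (simp add: sum_distrib_left sum_negf algebra_simps)
  finally show ?thesis .
qed

lemma sp_br: "is_sp n X \<Longrightarrow> is_sp n Y \<Longrightarrow> is_sp n (mbr (2*n) X Y)"
proof -
  assume X: "is_sp n X" and Y: "is_sp n Y"
  have s: "supp_ok (2*n) (mbr (2*n) X Y)" using X Y unfolding sp_char by (simp add: supp_br)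
  have "sg n i * mbr (2*n) X Y (pin n i) j = sg n j * mbr (2*n) X Y (pin n j) i"
    if i: "i\<in>{1..2*n}" and j: "j\<in>{1..2*n}" for i j
  proof -
    have e: "\<And>a b. mbr (2*n) X Y a b = (\<Sum>l\<in>{1..2*n}. X a l * Y l b) - (\<Sum>l\<in>{1..2*n}. Y a l * X l b)"
      by (simp add: mbr_def sum_subtractf)
    have "sg n i * mbr (2*n) X Y (pin n i) j =
        sg n i * (\<Sum>l\<in>{1..2*n}. X (pin n i) l * Y l j) - sg n i * (\<Sum>l\<in>{1..2*n}. Y (pin n i) l * X l j)"
      unfolding e by (simp add: right_diff_distrib)
    also have "\<dots> = - sg n j * (\<Sum>l\<in>{1..2*n}. Y (pin n j) l * X l i) + sg n j * (\<Sum>l\<in>{1..2*n}. X (pin n j) l * Y l i)"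
      unfolding sp_key[OF X Y i j] sp_key[OF Y X i j] by simp
    also have "\<dots> = sg n j * mbr (2*n) X Y (pin n j) i"
      unfolding e by (simp add: algebra_simps)
    finally show ?thesis .
  qed
  then show ?thesis using s unfolding sp_char by blast
qed

lemma vadd_comp: "vadd X Y k = madd (X k) (Y k)" by (simp add: vadd_def madd_def)
lemma vscal_comp: "vscal c X k = mscal c (X k)" by (simp add: vscal_def mscal_def)

lemma psi_e_sl: "i \<in> {1..n} \<Longrightarrow> n \<ge> 3 \<Longrightarrow> is_sl (2*n) (psi_e n b i)"
  by (rule sl_diag0) (auto simp: supp_ok_def psi_e_def Eu_def madd_def mscal_def)
lemma psi_f_sl: "i \<in> {1..n} \<Longrightarrow> n \<ge> 3 \<Longrightarrow> is_sl (2*n) (psi_f n b i)"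
  by (rule sl_diag0) (auto simp: supp_ok_def psi_f_def Eu_def madd_def mscal_def)

lemma psi_e_sp: "i \<in> {1..n} \<Longrightarrow> n \<ge> 3 \<Longrightarrow> is_sp n (psi_e n 1 i)"
proof -
  assume i: "i \<in> {1..n}" and n: "n \<ge> 3"
  show ?thesis
  proof (cases "i < n")
    case True
    have "psi_e n 1 i = Fm n i (i+1)" using True i by (simp add: psi_e_lt Fm1)
    then show ?thesis using Fm_sp[of i n "i+1"] True i by simp
  next
    case False
    then have "i = n" using i by simp
    have "psi_e n 1 n = Gm n n 1" by (auto simp: psi_e_n Gm_def mscal_def madd_def mult_2 intro!: ext)
    also have "\<dots> = Fm n n (n+1)" using Fm2[of n n "n+1"] by simp
    finally show ?thesis using Fm_sp[of n n "n+1"] \<open>i = n\<close> n by simp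
  qed
qed

lemma psi_f_sp: "i \<in> {1..n} \<Longrightarrow> n \<ge> 3 \<Longrightarrow> is_sp n (psi_f n 1 i)"
proof -
  assume i: "i \<in> {1..n}" and n: "n \<ge> 3"
  show ?thesis
  proof (cases "i < n")
    case True
    have "psi_f n 1 i = Fm n (i+1) i" using True i by (simp add: psi_f_lt Fm1)
    then show ?thesis using Fm_sp[of "i+1" n i] True i by simp
  next
    case False
    then have "i = n" using i by simp
    have "psi_f n 1 n = Hm n 1 n" by (auto simp: psi_f_n Hm_def mscal_def madd_def mult_2 intro!: ext)
    also have "\<dots> = Fm n (n+1) n" using Fm3[of n "n+1" n] by simp
    finally show ?thesis using Fm_sp[of "n+1" n n] \<open>i = n\<close> n by simp
  qed
qed

lemma ss_add: "x \<in> sp_sl_sum n K \<Longrightarrow> y \<in> sp_sl_sum n K \<Longrightarrow> vadd x y \<in> sp_sl_sum n K"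
proof -
  assume x: "x \<in> sp_sl_sum n K" and y: "y \<in> sp_sl_sum n K"
  have "is_sp n (madd (x 1) (y 1))" using x y by (intro sp_add) (simp_all add: sp_sl_sum_def)
  moreover have "\<forall>k\<in>{2..K}. is_sl (2*n) (madd (x k) (y k))" using x y by (auto intro!: sl_add simp: sp_sl_sum_def)
  moreover have "\<forall>k. k \<notin> {1..K} \<longrightarrow> vadd x y k = (\<lambda>_ _. 0)" using x y by (auto simp: sp_sl_sum_def vadd_def)
  ultimately show ?thesis by (simp add: sp_sl_sum_def vadd_comp)
qed

lemma ss_scal: "x \<in> sp_sl_sum n K \<Longrightarrow> vscal c x \<in> sp_sl_sum n K"
proof -
  assume x: "x \<in> sp_sl_sum n K"
  have "is_sp n (mscal c (x 1))" using x by (intro sp_scal) (simp_all add: sp_sl_sum_def)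
  moreover have "\<forall>k\<in>{2..K}. is_sl (2*n) (mscal c (x k))" using x by (auto intro!: sl_scal simp: sp_sl_sum_def)
  moreover have "\<forall>k. k \<notin> {1..K} \<longrightarrow> vscal c x k = (\<lambda>_ _. 0)" using x by (auto simp: sp_sl_sum_def vscal_def)
  ultimately show ?thesis by (simp add: sp_sl_sum_def vscal_comp)
qed

lemma ss_br: "x \<in> sp_sl_sum n K \<Longrightarrow> y \<in> sp_sl_sum n K \<Longrightarrow> vbr (2*n) x y \<in> sp_sl_sum n K"
proof -
  assume x: "x \<in> sp_sl_sum n K" and y: "y \<in> sp_sl_sum n K"
  have "is_sp n (mbr (2*n) (x 1) (y 1))" using x y by (intro sp_br) (simp_all add: sp_sl_sum_def)
  moreover have "\<forall>k\<in>{2..K}. is_sl (2*n) (mbr (2*n) (x k) (y k))" using x y by (auto intro!: sl_br simp: sp_sl_sum_def)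
  moreover have "\<forall>k. k \<notin> {1..K} \<longrightarrow> vbr (2*n) x y k = (\<lambda>_ _. 0)" using x y by (auto simp: sp_sl_sum_def vbr_def)
  ultimately show ?thesis by (simp add: sp_sl_sum_def vbr_comp)
qed

context LS begin

lemma gen_in: "x \<in> {psiv_e n K a i, psiv_f n K a i} \<Longrightarrow> i \<in> {1..n} \<Longrightarrow> x \<in> sp_sl_sum n K"
proof -
  assume x: "x \<in> {psiv_e n K a i, psiv_f n K a i}" and i: "i \<in> {1..n}"
  have out: "\<forall>k. k \<notin> {1..K} \<longrightarrow> x k = (\<lambda>_ _. 0)" using x by (auto simp: psiv_e_def psiv_f_def)
  have one: "is_sp n (x 1)" using x K1 a1 psi_e_sp[OF i n3] psi_f_sp[OF i n3]
    by (auto simp: psiv_e_def psiv_f_def)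
  have sl: "\<forall>k\<in>{2..K}. is_sl (2*n) (x k)" using x psi_e_sl[OF i n3] psi_f_sl[OF i n3]
    by (auto simp: psiv_e_def psiv_f_def)
  show ?thesis using out one sl by (simp add: sp_sl_sum_def)
qed

lemma sub: "lie_gen (2*n) GG \<subseteq> sp_sl_sum n K"
proof
  fix x assume "x \<in> lie_gen (2*n) GG"
  then show "x \<in> sp_sl_sum n K"
  proof (induction rule: lie_gen.induct)
    case zero
    have z: "is_sp n (\<lambda>i j. 0)" "is_sl (2*n) (\<lambda>i j. 0)"
      by (auto simp: sp_char is_sl_def supp_ok_def)
    show ?case using z by (simp add: sp_sl_sum_def)
  next
    case (add x y) then show ?case using ss_add by blast
  next
    case (scal x c) then show ?case using ss_scal by blast
  next
    case (br x y) then show ?case using ss_br by blast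
  next
    case (gen x)
    then obtain i where i: "i \<in> {1..n}" and x: "x \<in> {psiv_e n K a i, psiv_f n K a i,
                   vbr (2*n) (psiv_e n K a i) (psiv_f n K a i)}"
      unfolding GG_def by blast
    have e: "psiv_e n K a i \<in> sp_sl_sum n K" and f: "psiv_f n K a i \<in> sp_sl_sum n K"
      using gen_in[OF _ i] by auto
    show ?case
    proof (cases "x = vbr (2*n) (psiv_e n K a i) (psiv_f n K a i)")
      case False
      then show ?thesis using x gen_in[OF _ i] by auto
    next
      case True
      show ?thesis unfolding True using e f by (rule ss_br)
    qed
  qed
qed

lemma main: "psi_image n K a = sp_sl_sum n K"
  unfolding psi_image_eq using sub sup by blast

end

theorem lemma5p2:
  fixes n K :: nat and a :: "nat \<Rightarrow> complex"
  assumes "n \<ge> 3" and "K \<ge> 1"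
    and "\<forall>k\<in>{1..K}. a k \<noteq> 0"
    and "\<forall>k\<in>{1..K}. \<forall>j\<in>{1..K}. k \<noteq> j \<longrightarrow> a k \<noteq> a j \<and> a k \<noteq> inverse (a j)"
    and "a 1 = 1"
    and "\<forall>k\<in>{2..K}. a k \<noteq> -1"
  shows "\<exists>f. lie_iso (2*n) (psi_image n K a) (sp_sl_sum n K) f"
proof -
  interpret LS n K a using assms by unfold_locales
  have "lie_iso (2*n) (psi_image n K a) (sp_sl_sum n K) id"
    unfolding lie_iso_def main by (simp add: bij_betw_def)
  then show ?thesis by blast
qed

end
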